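(* Let $\gamma>0$ and $f_I=\chi_{[0,1/(1+\gamma)]}$ (value $1$ on $[0,\frac1{1+\gamma}]$, $0$ elsewhere), so that $u_I(\xi)=(\gamma\xi)^{1/\gamma}\chi_{[0,1/\gamma]}(\xi)$. Then the entropy solution $u$ of the split Cauchy problem with datum $u_I$ vanishes for $\xi<0$ and for $\xi>0$ is $$u(\xi,t)=\begin{cases}\left(\frac{\gamma\xi}{1-\gamma t}\right)^{1/\gamma}, & 0\le\xi\le\frac1\gamma-t,\ 0\le t<\frac1\gamma,\\[1mm] \left(\frac{1-\gamma\xi}{\gamma t}\right)^{1/\gamma}, & \max\{0,\frac1\gamma-t\}\le\xi\le\frac1\gamma,\\[1mm] 0&\text{otherwise.}\end{cases}$$ Consequently $\rho(x,t)=\xi'(x)u(\xi(x),t)$ is given, for $x>0$, by $$\rho(x,t)=\begin{cases}(1-\gamma t)^{-1/\gamma}, & 0< x\le \frac{(1-\gamma t)^{(1+\gamma)/\gamma}}{1+\gamma},\ 0\le t<\frac1\gamma,\\[1mm] \left[\frac{((1+\gamma)x)^{-\gamma/(1+\gamma)}-1}{\gamma t}\right]^{1/\gamma}, & \max\Bigl\{0,\frac{(1-\gamma t)_+^{(1+\gamma)/\gamma}}{1+\gamma}\Bigr\}\le x\le\frac1{1+\gamma},\\[1mm] 0&\text{otherwise,}\end{cases}$$ and $\rho(x,t)=0$ for $x<0$. In particular $\int_0^\infty\rho(x,t)\,dx=\frac1{1+\gamma}$ for $0\le t\le\frac1\gamma$, while $\int_0^\infty\rho(x,t)\,dx=\frac{1}{1+\gamma}(\gamma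 t)^{-1/\gamma}$ for $t\ge\frac1\gamma$.
   Context: Here $\xi(x)=\operatorname{sign}(x)\frac1\gamma((1+\gamma)|x|)^{\gamma/(1+\gamma)}$ and $u_I(\xi)=(\gamma|\xi|)^{1/\gamma}f_I\bigl(\operatorname{sign}(\xi)\frac{1}{1+\gamma}(\gamma|\xi|)^{(1+\gamma)/\gamma}\bigr)$. An entropy solution of the split Cauchy problem with datum $u_I$ means: $u\in L^\infty([0,\infty);L^1\cap BV(\mathbb{R}))$, $u|_{\xi>0}$ a weak solution of $u_t-(\frac{1}{1+\gamma}u^{1+\gamma})_\xi=0$ on $\xi>0$ with datum $u_I|_{\xi>0}$ (no boundary condition at $\xi=0$), $u|_{\xi<0}$ a weak solution of $u_t+(\frac{1}{1+\gamma}u^{1+\gamma})_\xi=0$ on $\xi<0$ with datum $u_I|_{\xi<0}$, and for every $t$: $u(\xi_0^-,t)\ge u(\xi_0^+,t)$ if $\xi_0<0$, $u(\xi_0^-,t)\le u(\xi_0^+,t)$ if $\xi_0>0$ (such a solution is unique). *)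

theory Defs
  imports "HOL-Analysis.Analysis"
begin

definition xi_map :: "real \<Rightarrow> real \<Rightarrow> real" where
  "xi_map \<gamma> x = sgn x * (1 / \<gamma>) * (((1 + \<gamma>) * \<bar>x\<bar>) powr (\<gamma> / (1 + \<gamma>)))"

definition uI_of :: "real \<Rightarrow> (real \<Rightarrow> real) \<Rightarrow> real \<Rightarrow> real" where
  "uI_of \<gamma> fI \<xi> = ((\<gamma> * \<bar>\<xi>\<bar>) powr (1 / \<gamma>)) *
      fI (sgn \<xi> * (1 / (1 + \<gamma>)) * ((\<gamma> * \<bar>\<xi>\<bar>) powr ((1 + \<gamma>) / \<gamma>)))"

text \<open>Flux u^(1+gamma)/(1+gamma) (only evaluated on nonnegative u in this setting).\<close>

definition flux :: "real \<Rightarrow> real \<Rightarrow> real" where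
  "flux \<gamma> v = \<bar>v\<bar> powr (1 + \<gamma>) / (1 + \<gamma>)"

definition variation_sum :: "(real \<Rightarrow> real) \<Rightarrow> real list \<Rightarrow> real" where
  "variation_sum f xs = (\<Sum>i<length xs - 1. \<bar>f (xs ! Suc i) - f (xs ! i)\<bar>)"

text \<open>u \<in> L^\<infinity>([0,\<infinity>); L^1 \<inter> BV(R)): u is jointly Borel measurable and, uniformly in t \<ge> 0,
  u(.,t) is integrable and of bounded variation.\<close>

definition Linf_L1_BV :: "(real \<Rightarrow> real \<Rightarrow> real) \<Rightarrow> bool" where
  "Linf_L1_BV u \<longleftrightarrow>
     (\<lambda>p. u (fst p) (snd p)) \<in> borel_measurable borel \<and>
     (\<exists>M. \<forall>t\<ge>0. integrable lborel (\<lambda>\<xi>. u \<xi> t) \<and>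
                 (\<integral>\<xi>. \<bar>u \<xi> t\<bar> \<partial>lborel) \<le> M \<and>
                 (\<forall>xs. sorted xs \<longrightarrow> variation_sum (\<lambda>\<xi>. u \<xi> t) xs \<le> M))"

text \<open>C^1 test functions with compact support contained in S (as subset of R x R, with
  coordinates (xi, t)); phx, pht are the (continuous) partial derivatives.\<close>

definition test_fun :: "(real \<times> real) set \<Rightarrow> (real \<times> real \<Rightarrow> real) \<Rightarrow>
    (real \<times> real \<Rightarrow> real) \<Rightarrow> (real \<times> real \<Rightarrow> real) \<Rightarrow> bool" where
  "test_fun S \<phi> phx pht \<longleftrightarrow>
     (\<forall>\<xi> t. ((\<lambda>s. \<phi> (s, t)) has_real_derivative phx (\<xi>, t)) (at \<xi>)) \<and>
     (\<forall>\<xi> t. ((\<lambda>s. \<phi> (\<xi>, s)) has_real_derivative pht (\<xi>, t)) (at t)) \<and>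
     continuous_on UNIV phx \<and> continuous_on UNIV pht \<and>
     compact (closure {p. \<phi> p \<noteq> 0}) \<and> closure {p. \<phi> p \<noteq> 0} \<subseteq> S"

text \<open>Weak solution on xi > 0 of u_t - (flux u)_xi = 0 with datum uI (no boundary condition
  at xi = 0: test functions are supported in xi > 0).\<close>

definition weak_sol_pos :: "real \<Rightarrow> (real \<Rightarrow> real) \<Rightarrow> (real \<Rightarrow> real \<Rightarrow> real) \<Rightarrow> bool" where
  "weak_sol_pos \<gamma> uI u \<longleftrightarrow>
     (\<forall>\<phi> phx pht. test_fun {p. fst p > 0} \<phi> phx pht \<longrightarrow>
        (LINT p : {p. fst p > 0 \<and> snd p \<ge> 0} | lborel.
            u (fst p) (snd p) * pht p - flux \<gamma> (u (fst p) (snd p)) * phx p)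
        + (LINT \<xi> : {0<..} | lborel. uI \<xi> * \<phi> (\<xi>, 0)) = 0)"

text \<open>Weak solution on xi < 0 of u_t + (flux u)_xi = 0 with datum uI.\<close>

definition weak_sol_neg :: "real \<Rightarrow> (real \<Rightarrow> real) \<Rightarrow> (real \<Rightarrow> real \<Rightarrow> real) \<Rightarrow> bool" where
  "weak_sol_neg \<gamma> uI u \<longleftrightarrow>
     (\<forall>\<phi> phx pht. test_fun {p. fst p < 0} \<phi> phx pht \<longrightarrow>
        (LINT p : {p. fst p < 0 \<and> snd p \<ge> 0} | lborel.
            u (fst p) (snd p) * pht p + flux \<gamma> (u (fst p) (snd p)) * phx p)
        + (LINT \<xi> : {..<0} | lborel. uI \<xi> * \<phi> (\<xi>, 0)) = 0)"

definition entropy_solution :: "real \<Rightarrow> (real \<Rightarrow> real) \<Rightarrow> (real \<Rightarrow> real \<Rightarrow> real) \<Rightarrow> bool" where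
  "entropy_solution \<gamma> uI u \<longleftrightarrow>
     Linf_L1_BV u \<and> weak_sol_pos \<gamma> uI u \<and> weak_sol_neg \<gamma> uI u \<and>
     (\<forall>t>0. \<forall>\<xi>0.
        (\<xi>0 < 0 \<longrightarrow> Lim (at_left \<xi>0) (\<lambda>\<xi>. u \<xi> t) \<ge> Lim (at_right \<xi>0) (\<lambda>\<xi>. u \<xi> t)) \<and>
        (\<xi>0 > 0 \<longrightarrow> Lim (at_left \<xi>0) (\<lambda>\<xi>. u \<xi> t) \<le> Lim (at_right \<xi>0) (\<lambda>\<xi>. u \<xi> t)))"

definition u_expl :: "real \<Rightarrow> real \<Rightarrow> real \<Rightarrow> real" where
  "u_expl \<gamma> \<xi> t =
     (if 0 \<le> \<xi> \<and> \<xi> \<le> 1/\<gamma> - t \<and> 0 \<le> t \<and> t < 1/\<gamma> then (\<gamma> * \<xi> / (1 - \<gamma> * t)) powr (1/\<gamma>)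
      else if max 0 (1/\<gamma> - t) \<le> \<xi> \<and> \<xi> \<le> 1/\<gamma> then ((1 - \<gamma> * \<xi>) / (\<gamma> * t)) powr (1/\<gamma>)
      else 0)"

definition rho_expl :: "real \<Rightarrow> real \<Rightarrow> real \<Rightarrow> real" where
  "rho_expl \<gamma> x t =
     (if 0 < x \<and> x \<le> (1 - \<gamma> * t) powr ((1 + \<gamma>) / \<gamma>) / (1 + \<gamma>) \<and> 0 \<le> t \<and> t < 1/\<gamma>
        then (1 - \<gamma> * t) powr (- 1/\<gamma>)
      else if max 0 ((max (1 - \<gamma> * t) 0) powr ((1 + \<gamma>) / \<gamma>) / (1 + \<gamma>)) \<le> x \<and> x \<le> 1 / (1 + \<gamma>)
        then ((((1 + \<gamma>) * x) powr (- \<gamma> / (1 + \<gamma>)) - 1) / (\<gamma> * t)) powr (1/\<gamma>)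
      else 0)"

end

theory Submission
  imports Defs
begin


lemma u_neg_xi: "\<xi> < 0 \<Longrightarrow> u_expl g \<xi> t = 0"
  by (simp add: u_expl_def)

lemma u_neg_t: "g > 0 \<Longrightarrow> t < 0 \<Longrightarrow> u_expl g \<xi> t = 0"
  by (auto simp add: u_expl_def)

lemma u_big: "g > 0 \<Longrightarrow> \<xi> > 1/g \<Longrightarrow> t \<ge> 0 \<Longrightarrow> u_expl g \<xi> t = 0"
  by (auto simp add: u_expl_def)

lemma u_big': "g > 0 \<Longrightarrow> \<xi> > 1/g \<Longrightarrow> u_expl g \<xi> t = 0"
  by (cases "t < 0") (auto simp add: u_expl_def)

lemma u_nonneg: "0 \<le> u_expl g \<xi> t"
  by (simp add: u_expl_def)

lemma u_reg1:
  assumes g: "g > 0" and "0 \<le> \<xi>" "\<xi> \<le> 1/g - t" "0 \<le> t" "t < 1/g"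
  shows "u_expl g \<xi> t = (g*\<xi>) powr (1/g) / (1 - g*t) powr (1/g)"
proof -
  have "1 - g*t > 0" using assms by (simp add: field_simps)
  then show ?thesis using assms by (simp add: u_expl_def powr_divide)
qed

lemma u_reg2:
  assumes g: "g > 0" and "0 < t" "0 \<le> \<xi>" "1/g - t \<le> \<xi>" "\<xi> \<le> 1/g"
  shows "u_expl g \<xi> t = (1 - g*\<xi>) powr (1/g) / (g*t) powr (1/g)"
proof (cases "\<xi> \<le> 1/g - t \<and> t < 1/g")
  case True
  have e: "\<xi> = 1/g - t" using True assms by linarith
  have "1 - g*t > 0" using True g by (simp add: field_simps)
  have a: "g*\<xi>/(1 - g*t) = 1" using e g \<open>1 - g*t > 0\<close> by (simp add: field_simps)
  have b: "1 - g*\<xi> = g*t" using e g by (simp add: field_simps)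
  have l0: "u_expl g \<xi> t = (g*\<xi>/(1 - g*t)) powr (1/g)" using True assms by (simp add: u_expl_def)
  have l: "u_expl g \<xi> t = 1" unfolding l0 a by simp
  have "g*t > 0" using g assms by simp
  then show ?thesis unfolding l b using g assms by simp
next
  case False
  have "1 - g*\<xi> \<ge> 0" using assms by (simp add: field_simps)
  then show ?thesis using False assms by (auto simp add: u_expl_def powr_divide)
qed

lemma u_le1:
  assumes g: "g > 0" shows "u_expl g \<xi> t \<le> 1"
proof -
  consider "0 \<le> \<xi> \<and> \<xi> \<le> 1/g - t \<and> 0 \<le> t \<and> t < 1/g"
    | "\<not>(0 \<le> \<xi> \<and> \<xi> \<le> 1/g - t \<and> 0 \<le> t \<and> t < 1/g)" "max 0 (1/g - t) \<le> \<xi> \<and> \<xi> \<le> 1/g"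
    | "\<not>(0 \<le> \<xi> \<and> \<xi> \<le> 1/g - t \<and> 0 \<le> t \<and> t < 1/g)" "\<not>(max 0 (1/g - t) \<le> \<xi> \<and> \<xi> \<le> 1/g)"
    by blast
  then show ?thesis
  proof cases
    case 1
    then have p: "1 - g*t > 0" "g*\<xi> \<le> 1 - g*t" "0 \<le> g*\<xi>" using g by (auto simp: field_simps)
    then have "g*\<xi>/(1-g*t) \<le> 1" "0 \<le> g*\<xi>/(1-g*t)" by auto
    then show ?thesis using 1 g p by (simp add: u_expl_def) (rule powr_le1, auto)
  next
    case 2
    have h: "1/g - t \<le> \<xi>" "\<xi> \<le> 1/g" "0 \<le> \<xi>" "0 < 1/g" using 2 g by auto
    have t: "t > 0"
    proof (rule ccontr)
      assume "\<not> t > 0"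
      then have "t = 0" using h by linarith
      then show False using 2(1) h by auto
    qed
    then have p: "1 - g*\<xi> \<le> g*t" "0 \<le> 1 - g*\<xi>" using 2 g by (auto simp: field_simps)
    then have "(1-g*\<xi>)/(g*t) \<le> 1" "0 \<le> (1-g*\<xi>)/(g*t)" using t g by auto
    then have "((1-g*\<xi>)/(g*t)) powr (1/g) \<le> 1" using g by (intro powr_le1) auto
    then show ?thesis using 2 t by (auto simp add: u_expl_def)
  next
    case 3 then show ?thesis unfolding u_expl_def if_not_P[OF 3(1)] if_not_P[OF 3(2)] by simp
  qed
qed


lemma uI_formula:
  assumes g: "g > 0"
  shows "uI_of g (indicator {0 .. 1 / (1 + g)}) \<xi> = (g * \<xi>) powr (1/g) * indicator {0 .. 1/g} \<xi>"
proof (cases "\<xi> > 0")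
  case True
  have "g*\<xi> > 0" using g True by simp
  have "(g*\<xi>) powr ((1+g)/g) \<le> 1 \<longleftrightarrow> g*\<xi> \<le> 1"
  proof
    assume "(g*\<xi>) powr ((1+g)/g) \<le> 1"
    then have "((g*\<xi>) powr ((1+g)/g)) powr (g/(1+g)) \<le> 1" using g by (intro powr_le1) auto
    then show "g*\<xi> \<le> 1" using g \<open>g*\<xi> > 0\<close> by (simp add: powr_powr)
  next
    assume "g*\<xi> \<le> 1" then show "(g*\<xi>) powr ((1+g)/g) \<le> 1" using g \<open>g*\<xi> > 0\<close> by (intro powr_le1) auto
  qed
  moreover have "g*\<xi> \<le> 1 \<longleftrightarrow> \<xi> \<le> 1/g" using g by (simp add: field_simps)
  ultimately have iff: "(g*\<xi>) powr ((1+g)/g) \<le> 1 \<longleftrightarrow> \<xi> \<le> 1/g" by simp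
  have "1 / (1 + g) * (g*\<xi>) powr ((1+g)/g) \<le> 1/(1+g) \<longleftrightarrow> (g*\<xi>) powr ((1+g)/g) \<le> 1"
  proof -
    have "0 < 1/(1+g)" using g by simp
    then show ?thesis by (metis mult.right_neutral mult_le_cancel_left_pos)
  qed
  then have "indicator {0 .. 1 / (1 + g)} (1 / (1 + g) * (g*\<xi>) powr ((1+g)/g)) = (indicator {0..1/g} \<xi> :: real)"
    using iff True g by (simp add: indicator_def)
  then show ?thesis using True g by (simp add: uI_of_def)
next
  case False
  then have "\<xi> = 0 \<or> \<xi> < 0" by auto
  then show ?thesis
  proof
    assume "\<xi> = 0" then show ?thesis by (simp add: uI_of_def)
  next
    assume n: "\<xi> < 0"
    have "(g * \<bar>\<xi>\<bar>) powr ((1 + g) / g) > 0" using g n by simp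
    then have "sgn \<xi> * (1 / (1 + g)) * (g * \<bar>\<xi>\<bar>) powr ((1 + g) / g) < 0" using n g
      by (simp add: mult_neg_pos)
    then show ?thesis using n by (simp add: uI_of_def indicator_def)
  qed
qed


lemma powr_le_iff_aux:
  fixes y c q :: real
  assumes "y > 0" "c > 0" "q > 0"
  shows "y powr q \<le> c \<longleftrightarrow> y \<le> c powr (1/q)"
proof
  assume "y powr q \<le> c"
  then have "(y powr q) powr (1/q) \<le> c powr (1/q)" using assms by (intro powr_mono2) auto
  then show "y \<le> c powr (1/q)" using assms by (simp add: powr_powr)
next
  assume "y \<le> c powr (1/q)"
  then have "y powr q \<le> (c powr (1/q)) powr q" using assms by (intro powr_mono2) auto
  then show "y powr q \<le> c" using assms by (simp add: powr_powr)
qed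

lemma deriv_xi:
  assumes g: "g > 0" and x: "x > 0"
  shows "deriv (xi_map g) x = ((1+g)*x) powr (-1/(1+g))"
proof -
  have d: "((\<lambda>x. (1/g) * ((1+g)*x) powr (g/(1+g))) has_real_derivative
      (1/g) * ((g/(1+g)) * ((1+g)*x) powr (g/(1+g) - 1) * (1+g))) (at x)"
    using g x by (auto intro!: derivative_eq_intros)
  have e: "(1/g) * ((g/(1+g)) * ((1+g)*x) powr (g/(1+g) - 1) * (1+g)) = ((1+g)*x) powr (-1/(1+g))"
  proof -
    have "g/(1+g) - 1 = -1/(1+g)" using g by (simp add: field_simps)
    then show ?thesis using g by simp
  qed
  have "(xi_map g has_real_derivative ((1+g)*x) powr (-1/(1+g))) (at x)"
    apply (rule has_field_derivative_transform_within_open[OF d[unfolded e], of "{0<..}"])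
    using x by (auto simp: xi_map_def)
  then show ?thesis by (rule DERIV_imp_deriv)
qed

lemma xi_pos: "g > 0 \<Longrightarrow> x > 0 \<Longrightarrow> xi_map g x = ((1+g)*x) powr (g/(1+g)) / g"
  by (simp add: xi_map_def)

lemma xi_neg: "g > 0 \<Longrightarrow> x < 0 \<Longrightarrow> xi_map g x < 0"
  by (simp add: xi_map_def)

lemma rho_neg:
  assumes "g > 0" "x < 0"
  shows "deriv (xi_map g) x * u_expl g (xi_map g x) t = 0"
  using assms by (simp add: xi_neg u_neg_xi)

lemma rho_pos:
  assumes g: "g > 0" and x: "x > 0" and t: "t \<ge> 0"
  shows "deriv (xi_map g) x * u_expl g (xi_map g x) t = rho_expl g x t"
proof -
  define y where "y = (1+g)*x"
  define q where "q = g/(1+g)"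
  have y: "y > 0" using g x by (simp add: y_def)
  have q: "q > 0" "q < 1" using g by (auto simp: q_def)
  have iq: "1/q = (1+g)/g" using g by (simp add: q_def)
  define \<xi> where "\<xi> = xi_map g x"
  have gxi: "g*\<xi> = y powr q" using g x by (simp add: \<xi>_def xi_pos y_def q_def)
  have xi0: "\<xi> > 0" using gxi g y by (smt (verit) mult_pos_pos powr_gt_zero zero_less_mult_iff)
  have D: "deriv (xi_map g) x = (y powr (-q)) powr (1/g)"
  proof -
    have "-q * (1/g) = -1/(1+g)" using g by (simp add: q_def)
    then show ?thesis using g x y by (simp add: deriv_xi y_def[symmetric] powr_powr)
  qed
  have xle: "\<And>c. c > 0 \<Longrightarrow> x \<le> c powr ((1+g)/g) / (1+g) \<longleftrightarrow> g*\<xi> \<le> c"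
  proof -
    fix c :: real assume c: "c > 0"
    have "x \<le> c powr ((1+g)/g) / (1+g) \<longleftrightarrow> y \<le> c powr (1/q)" using g by (simp add: y_def iq field_simps)
    also have "\<dots> \<longleftrightarrow> y powr q \<le> c" using powr_le_iff_aux[OF y c q(1)] by simp
    finally show "x \<le> c powr ((1+g)/g) / (1+g) \<longleftrightarrow> g*\<xi> \<le> c" using gxi by simp
  qed
  have xge: "\<And>c. c > 0 \<Longrightarrow> c powr ((1+g)/g) / (1+g) \<le> x \<longleftrightarrow> c \<le> g*\<xi>"
  proof -
    fix c :: real assume c: "c > 0"
    have "c powr ((1+g)/g) / (1+g) \<le> x \<longleftrightarrow> \<not> x < c powr ((1+g)/g) / (1+g)" by auto
    also have "x < c powr ((1+g)/g) / (1+g) \<longleftrightarrow> x \<le> c powr ((1+g)/g) / (1+g) \<and> x \<noteq> c powr ((1+g)/g) / (1+g)" by auto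
    also have "x \<noteq> c powr ((1+g)/g) / (1+g) \<longleftrightarrow> g*\<xi> \<noteq> c"
    proof -
      have "x = c powr ((1+g)/g) / (1+g) \<longleftrightarrow> x \<le> c powr ((1+g)/g) / (1+g) \<and> c powr ((1+g)/g) / (1+g) \<le> x" by auto
      moreover have "c powr ((1+g)/g) / (1+g) \<le> x \<longleftrightarrow> c \<le> g*\<xi>"
      proof -
        have "c powr ((1+g)/g) / (1+g) \<le> x \<longleftrightarrow> c powr (1/q) \<le> y" using g by (simp add: y_def iq field_simps)
        also have "\<dots> \<longleftrightarrow> c \<le> y powr q"
        proof
          assume "c powr (1/q) \<le> y"
          then have "(c powr (1/q)) powr q \<le> y powr q" using q c by (intro powr_mono2) auto
          then show "c \<le> y powr q" using q c by (simp add: powr_powr)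
        next
          assume "c \<le> y powr q"
          then have "c powr (1/q) \<le> (y powr q) powr (1/q)" using q c by (intro powr_mono2) auto
          then show "c powr (1/q) \<le> y" using q y by (simp add: powr_powr)
        qed
        finally show ?thesis using gxi by simp
      qed
      ultimately show ?thesis using xle[OF c] by auto
    qed
    finally show "c powr ((1+g)/g) / (1+g) \<le> x \<longleftrightarrow> c \<le> g*\<xi>" using xle[OF c] by auto
  qed
  have rhs_eq: "rho_expl g x t = (if 0 \<le> \<xi> \<and> \<xi> \<le> 1/g - t \<and> 0 \<le> t \<and> t < 1/g then (1 - g*t) powr (- 1/g)
      else if max 0 (1/g - t) \<le> \<xi> \<and> \<xi> \<le> 1/g then ((y powr (-q) - 1) / (g*t)) powr (1/g) else 0)"
  proof -
    have A: "(0 < x \<and> x \<le> (1 - g * t) powr ((1 + g) / g) / (1 + g) \<and> 0 \<le> t \<and> t < 1/g)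
        \<longleftrightarrow> (0 \<le> \<xi> \<and> \<xi> \<le> 1/g - t \<and> 0 \<le> t \<and> t < 1/g)"
    proof (cases "t < 1/g")
      case True
      then have c: "1 - g*t > 0" using g by (simp add: field_simps)
      have "\<xi> \<le> 1/g - t \<longleftrightarrow> g*\<xi> \<le> 1 - g*t" using g by (simp add: field_simps)
      then show ?thesis using xle[OF c] x xi0 by auto
    qed auto
    have B1: "\<xi> \<le> 1/g \<longleftrightarrow> x \<le> 1/(1+g)"
    proof -
      have "\<xi> \<le> 1/g \<longleftrightarrow> g*\<xi> \<le> 1" using g by (simp add: field_simps)
      then show ?thesis using xle[of 1] by simp
    qed
    have B2: "max 0 (1/g - t) \<le> \<xi> \<longleftrightarrow> max 0 ((max (1 - g*t) 0) powr ((1 + g) / g) / (1 + g)) \<le> x"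
    proof (cases "1 - g*t > 0")
      case True
      have "max 0 (1/g - t) \<le> \<xi> \<longleftrightarrow> 1 - g*t \<le> g*\<xi>" using g xi0 by (auto simp: field_simps)
      then show ?thesis using xge[OF True] True x by auto
    next
      case False
      then have "1/g - t \<le> 0" using g by (simp add: field_simps)
      then show ?thesis using False x xi0 by auto
    qed
    have e: "(1+g)*x = y" "- g/(1+g) = -q" by (auto simp: y_def q_def)
    show ?thesis unfolding rho_expl_def A B1[symmetric] B2[symmetric] e by simp
  qed
  have lhs: "deriv (xi_map g) x * u_expl g (xi_map g x) t = (if 0 \<le> \<xi> \<and> \<xi> \<le> 1/g - t \<and> 0 \<le> t \<and> t < 1/g then (1 - g*t) powr (- 1/g)
      else if max 0 (1/g - t) \<le> \<xi> \<and> \<xi> \<le> 1/g then ((y powr (-q) - 1) / (g*t)) powr (1/g) else 0)"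
  proof -
    consider "0 \<le> \<xi> \<and> \<xi> \<le> 1/g - t \<and> 0 \<le> t \<and> t < 1/g"
      | "\<not>(0 \<le> \<xi> \<and> \<xi> \<le> 1/g - t \<and> 0 \<le> t \<and> t < 1/g)" "max 0 (1/g - t) \<le> \<xi> \<and> \<xi> \<le> 1/g"
      | "\<not>(0 \<le> \<xi> \<and> \<xi> \<le> 1/g - t \<and> 0 \<le> t \<and> t < 1/g)" "\<not>(max 0 (1/g - t) \<le> \<xi> \<and> \<xi> \<le> 1/g)"
      by blast
    then show ?thesis
    proof cases
      case 1
      then have c: "1 - g*t > 0" using g by (simp add: field_simps)
      have u: "u_expl g \<xi> t = (y powr q) powr (1/g) / (1-g*t) powr (1/g)"
        using u_reg1[OF g] 1 gxi by simp
      have "(y powr (-q)) powr (1/g) * (y powr q) powr (1/g) = 1"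
        using y by (simp add: powr_powr powr_add[symmetric])
      then have "(y powr (-q)) powr (1/g) * u_expl g \<xi> t = 1 / (1-g*t) powr (1/g)"
        unfolding u by (metis times_divide_eq_right)
      also have "\<dots> = (1-g*t) powr (- 1/g)" using c by (simp add: powr_minus_divide)
      finally show ?thesis using 1 D by (simp add: \<xi>_def)
    next
      case 2
      have t: "t > 0"
      proof (rule ccontr)
        assume "\<not> t > 0"
        have h: "1/g - t \<le> \<xi>" "\<xi> \<le> 1/g" "0 < 1/g" using 2 g by auto
        then have "t = 0" using \<open>\<not> t > 0\<close> by linarith
        then show False using 2 h xi0 by auto
      qed
      have u: "u_expl g \<xi> t = (1 - y powr q) powr (1/g) / (g*t) powr (1/g)"
        using u_reg2[OF g t] 2 gxi xi0 by simp
      have nn: "0 \<le> 1 - y powr q" using 2 gxi g by (simp add: field_simps)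
      have "(y powr (-q)) powr (1/g) * u_expl g \<xi> t = ((y powr (-q)) * ((1 - y powr q) / (g*t))) powr (1/g)"
        unfolding u using nn t g by (simp add: powr_mult powr_divide)
      also have "(y powr (-q)) * ((1 - y powr q) / (g*t)) = (y powr (-q) - 1) / (g*t)"
        using y by (simp add: field_simps powr_minus)
      moreover have "\<not>(\<xi> \<le> 1/g - t \<and> t < 1/g)" using 2(1) xi0 t by auto
      ultimately show ?thesis using 2 D unfolding \<xi>_def by (simp only: if_False if_True) simp
    next
      case 3
      have u0: "u_expl g \<xi> t = 0" unfolding u_expl_def by (simp only: if_not_P[OF 3(1)] if_not_P[OF 3(2)])
      show ?thesis unfolding \<xi>_def[symmetric] u0 by (simp only: if_not_P[OF 3(1)] if_not_P[OF 3(2)] mult_zero_right)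
    qed
  qed
  show ?thesis using lhs rhs_eq by simp
qed


definition Gf :: "real \<Rightarrow> real \<Rightarrow> real \<Rightarrow> real" where
  "Gf g t x = - ((g*t) powr (-1/g)) * (1 - ((1+g)*x) powr (g/(1+g))) powr ((1+g)/g) / (1+g)"

definition hf :: "real \<Rightarrow> real \<Rightarrow> real \<Rightarrow> real" where
  "hf g t x = ((((1 + g) * x) powr (- g / (1 + g)) - 1) / (g * t)) powr (1/g)"

lemma hf_alg:
  fixes y T q g :: real
  assumes y: "0 < y" "y < 1" and T: "T > 0" and g: "g > 0" and q: "q = g/(1+g)"
  shows "T powr (-1/g) * (1 - y powr q) powr (1/g) * y powr (q - 1) = ((y powr (-q) - 1)/T) powr (1/g)"
proof -
  have yq: "y powr q \<le> 1" using y g q by (intro powr_le1) auto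
  have "(y powr (-q) - 1)/T = y powr (-q) * (1 - y powr q) / T" using y by (simp add: powr_minus field_simps)
  then have "((y powr (-q) - 1)/T) powr (1/g) = (y powr (-q)) powr (1/g) * (1 - y powr q) powr (1/g) / T powr (1/g)"
    using yq T y by (simp add: powr_mult powr_divide)
  also have "(y powr (-q)) powr (1/g) = y powr (q - 1)"
  proof -
    have "-q * (1/g) = q - 1" using g q by (simp add: field_simps)
    then show ?thesis by (simp add: powr_powr)
  qed
  finally show ?thesis using T by (simp add: powr_minus_divide field_simps)
qed

lemma Gf_deriv:
  assumes g: "g > 0" and t: "t > 0" and x: "0 < x" "x < 1/(1+g)"
  shows "(Gf g t has_real_derivative hf g t x) (at x)"
proof -
  define q where "q = g/(1+g)"
  define y where "y = (1+g)*x"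
  have y: "0 < y" "y < 1" using x g by (auto simp: y_def field_simps intro: add_pos_pos)
  have yq: "y powr q < 1" using y g by (simp add: q_def powr01_less_one)
  have d: "(Gf g t has_real_derivative
      - ((g*t) powr (-1/g)) * (((1+g)/g) * (1 - y powr q) powr ((1+g)/g - 1) * (- (q * y powr (q - 1) * (1+g)))) / (1+g)) (at x)"
    unfolding Gf_def q_def[symmetric] using yq y g
    by (auto intro!: derivative_eq_intros simp: y_def)
  have "- ((g*t) powr (-1/g)) * (((1+g)/g) * (1 - y powr q) powr ((1+g)/g - 1) * (- (q * y powr (q - 1) * (1+g)))) / (1+g)
      = (g*t) powr (-1/g) * (1 - y powr q) powr (1/g) * y powr (q - 1)"
  proof -
    have e1: "(1+g)/g - 1 = 1/g" using g by (simp add: field_simps)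
    have k: "((1+g)/g) * q = 1" using g by (simp add: q_def)
    have aux: "\<And>A B C c. - A * (c * B * (- (q * C * (1+g)))) / (1+g) = A*B*C*(c*q)"
      using g by (simp add: field_simps)
    show ?thesis unfolding e1 aux k by simp
  qed
  also have "\<dots> = hf g t x" unfolding hf_def
    using hf_alg[OF y _ g q_def] g t by (simp add: y_def q_def)
  finally show ?thesis using d by simp
qed

lemma Gf_cont:
  assumes g: "g > 0"
  shows "continuous_on {0..1/(1+g)} (Gf g t)"
proof -
  have "continuous_on {0..1/(1+g)} (\<lambda>x. (1 - ((1+g)*x) powr (g/(1+g))) powr ((1+g)/g))"
  proof (rule continuous_on_powr')
    show "continuous_on {0..1/(1+g)} (\<lambda>x. 1 - ((1+g)*x) powr (g/(1+g)))"
      using g by (intro continuous_intros continuous_on_powr') auto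
    show "\<forall>x\<in>{0..1/(1+g)}. 0 \<le> 1 - ((1+g)*x) powr (g/(1+g)) \<and> (1 - ((1+g)*x) powr (g/(1+g)) = 0 \<longrightarrow> (1+g)/g > 0)"
    proof
      fix x :: real assume "x \<in> {0..1/(1+g)}"
      then have "\<bar>(1+g)*x\<bar> \<le> 1" using g by (auto simp: field_simps)
      then have "((1+g)*x) powr (g/(1+g)) \<le> 1" using g by (intro powr_le1) auto
      then show "0 \<le> 1 - ((1+g)*x) powr (g/(1+g)) \<and> (1 - ((1+g)*x) powr (g/(1+g)) = 0 \<longrightarrow> (1+g)/g > 0)"
        using g by auto
    qed
  qed (rule continuous_intros)
  then have "continuous_on {0..1/(1+g)} (\<lambda>x. (- ((g*t) powr (-1/g)) / (1+g)) * (1 - ((1+g)*x) powr (g/(1+g))) powr ((1+g)/g))"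
    by (rule continuous_on_mult_left)
  moreover have "Gf g t = (\<lambda>x. (- ((g*t) powr (-1/g)) / (1+g)) * (1 - ((1+g)*x) powr (g/(1+g))) powr ((1+g)/g))"
    by (auto simp: Gf_def)
  ultimately show ?thesis by simp
qed

lemma Gf_b: "g > 0 \<Longrightarrow> Gf g t (1/(1+g)) = 0"
  by (simp add: Gf_def)

lemma Gf_0: "g > 0 \<Longrightarrow> Gf g t 0 = - ((g*t) powr (-1/g)) / (1+g)"
  by (simp add: Gf_def)

lemma Gf_x1:
  assumes g: "g > 0" and t: "0 < t" "t < 1/g"
  shows "Gf g t ((1 - g*t) powr ((1+g)/g) / (1+g)) = - (g*t) / (1+g)"
proof -
  have c: "1 - g*t > 0" using g t by (simp add: field_simps)
  have "((1+g) * ((1 - g*t) powr ((1+g)/g) / (1+g))) powr (g/(1+g)) = 1 - g*t"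
    using g c by (simp add: powr_powr)
  then have e: "1 - ((1+g) * ((1 - g*t) powr ((1+g)/g) / (1+g))) powr (g/(1+g)) = g*t" by simp
  have "(g*t) powr (-1/g) * (g*t) powr ((1+g)/g) = g*t"
  proof -
    have "-1/g + (1+g)/g = 1" using g by (simp add: field_simps)
    then show ?thesis using g t by (simp add: powr_add[symmetric])
  qed
  then show ?thesis unfolding Gf_def e by simp
qed

lemma has_integral_to_Ioi:
  fixes f :: "real \<Rightarrow> real"
  assumes "(f has_integral I) {0..b}" and "\<And>x. x > b \<Longrightarrow> f x = 0"
  shows "(f has_integral I) {0<..}"
proof -
  have A: "((\<lambda>x. if x \<in> {0..b} then f x else 0) has_integral I) UNIV"
    using assms(1) has_integral_restrict_UNIV by blast
  have "((\<lambda>x. if x \<in> {0<..} then f x else 0) has_integral I) UNIV"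
    by (rule has_integral_spike_finite[of "{0}", OF _ _ A]) (use assms(2) in \<open>auto simp: not_le\<close>)
  then show ?thesis using has_integral_restrict_UNIV by blast
qed

lemma hf_integral:
  assumes g: "g > 0" and t: "t > 0" and ab: "0 \<le> a" "a \<le> 1/(1+g)"
  shows "(hf g t has_integral (Gf g t (1/(1+g)) - Gf g t a)) {a..1/(1+g)}"
proof (rule fundamental_theorem_of_calculus_interior[OF ab(2)])
  show "continuous_on {a..1/(1+g)} (Gf g t)"
    by (rule continuous_on_subset[OF Gf_cont[OF g]]) (use ab in auto)
  fix x assume "x \<in> {a<..<1/(1+g)}"
  then show "(Gf g t has_vector_derivative hf g t x) (at x)"
    using Gf_deriv[OF g t, of x] ab by (auto simp: has_real_derivative_iff_has_vector_derivative)
qed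

lemma rho_int_big:
  assumes g: "g > 0" and t: "t \<ge> 1/g"
  shows "((\<lambda>x. rho_expl g x t) has_integral (1 / (1 + g)) * (g * t) powr (- 1/g)) {0<..}"
proof -
  have t0: "t > 0" using g t by (smt (verit) divide_pos_pos)
  have c: "1 - g*t \<le> 0" using g t by (simp add: field_simps)
  have "(hf g t has_integral (Gf g t (1/(1+g)) - Gf g t 0)) {0..1/(1+g)}"
    using hf_integral[OF g t0, of 0] g by simp
  then have A: "(hf g t has_integral (1 / (1 + g)) * (g * t) powr (- 1/g)) {0..1/(1+g)}"
    using g by (simp add: Gf_b Gf_0)
  have "((\<lambda>x. rho_expl g x t) has_integral (1 / (1 + g)) * (g * t) powr (- 1/g)) {0..1/(1+g)}"
    by (rule has_integral_spike_finite[of "{0}", OF _ _ A]) (use c t g in \<open>auto simp: rho_expl_def hf_def max_def\<close>)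
  then show ?thesis
    by (rule has_integral_to_Ioi) (use g t in \<open>auto simp: rho_expl_def\<close>)
qed


lemma rho_int_small:
  assumes g: "g > 0" and t: "0 \<le> t" "t < 1/g"
  shows "((\<lambda>x. rho_expl g x t) has_integral 1 / (1 + g)) {0<..}"
proof -
  have c: "1 - g*t > 0" using g t by (simp add: field_simps)
  define x1 where "x1 = (1 - g*t) powr ((1+g)/g) / (1+g)"
  define c0 where "c0 = (1 - g*t) powr (- 1/g)"
  have x1pos: "x1 > 0" using c g by (simp add: x1_def)
  have x1b: "x1 \<le> 1/(1+g)"
  proof -
    have "(1 - g*t) powr ((1+g)/g) \<le> 1" using c g t by (intro powr_le1) (auto simp: mult_nonneg_nonneg)
    then show ?thesis using g by (simp add: x1_def divide_right_mono)
  qed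
  have c0x1: "c0 * x1 = (1 - g*t) / (1+g)"
  proof -
    have "- 1/g + (1+g)/g = 1" using g by (simp add: field_simps)
    then have "c0 * (1 - g*t) powr ((1+g)/g) = 1 - g*t" using c by (simp add: c0_def powr_add[symmetric])
    then show ?thesis by (simp add: x1_def)
  qed
  have P1: "((\<lambda>x. rho_expl g x t) has_integral c0 * x1) {0..x1}"
  proof -
    have A: "((\<lambda>x. c0) has_integral c0 * x1) {0..x1}"
      using has_integral_const_real[of c0 0 x1] x1pos by (simp add: mult.commute)
    show ?thesis
      by (rule has_integral_spike_finite[of "{0}", OF _ _ A]) (use t in \<open>auto simp: rho_expl_def c0_def x1_def\<close>)
  qed
  have P2: "((\<lambda>x. rho_expl g x t) has_integral g*t/(1+g)) {x1..1/(1+g)}"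
  proof (cases "t = 0")
    case True
    then have "x1 = 1/(1+g)" using g by (simp add: x1_def)
    then show ?thesis using True has_integral_refl(2)[of _ "1/(1+g)"] by simp
  next
    case False
    then have t0: "t > 0" using t by simp
    have A: "(hf g t has_integral (Gf g t (1/(1+g)) - Gf g t x1)) {x1..1/(1+g)}"
      using hf_integral[OF g t0, of x1] x1pos x1b by simp
    then have A: "(hf g t has_integral g*t/(1+g)) {x1..1/(1+g)}"
      using Gf_b[OF g] Gf_x1[OF g t0 t(2)] by (simp add: x1_def)
    show ?thesis
    proof (rule has_integral_spike_finite[of "{x1}", OF _ _ A])
      fix x assume x: "x \<in> {x1..1/(1+g)} - {x1}"
      then have "x > x1" by auto
      then have "\<not> (x \<le> (1 - g * t) powr ((1 + g) / g) / (1 + g))" by (simp add: x1_def)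
      moreover have "max 0 ((max (1 - g * t) 0) powr ((1 + g) / g) / (1 + g)) = x1"
        using c x1pos by (simp add: x1_def)
      ultimately show "rho_expl g x t = hf g t x" using x \<open>x > x1\<close> by (simp add: rho_expl_def hf_def)
    qed simp
  qed
  have "((\<lambda>x. rho_expl g x t) has_integral c0 * x1 + g*t/(1+g)) {0..1/(1+g)}"
    by (rule has_integral_combine[OF _ x1b P1 P2]) (use x1pos in simp)
  moreover have "c0 * x1 + g*t/(1+g) = 1/(1+g)"
    using g unfolding c0x1 by (simp add: field_simps)
  ultimately have "((\<lambda>x. rho_expl g x t) has_integral 1/(1+g)) {0..1/(1+g)}" by simp
  then show ?thesis
  proof (rule has_integral_to_Ioi)
    fix x :: real assume x: "x > 1/(1+g)"
    then show "rho_expl g x t = 0" using x1b by (auto simp: rho_expl_def x1_def[symmetric])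
  qed
qed


lemma u_meas: "(\<lambda>p. u_expl g (fst p) (snd p)) \<in> borel_measurable borel"
  unfolding u_expl_def borel_prod[symmetric] by measurable


lemma u_closed_small:
  assumes g: "g > 0" and t: "0 < t" "t < 1/g" and x: "\<xi> > 0"
  shows "u_expl g \<xi> t = (max 0 (min (g*\<xi>/(1-g*t)) ((1-g*\<xi>)/(g*t)))) powr (1/g)"
proof -
  have c: "1 - g*t > 0" using g t by (simp add: field_simps)
  have gt: "g*t > 0" using g t by simp
  consider "\<xi> \<le> 1/g - t" | "1/g - t < \<xi>" "\<xi> \<le> 1/g" | "\<xi> > 1/g" by linarith
  then show ?thesis
  proof cases
    case 1
    then have a: "g*\<xi> \<le> 1 - g*t" using g by (simp add: field_simps)
    then have "g*\<xi>/(1-g*t) \<le> 1" using c by simp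
    moreover have "1 \<le> (1-g*\<xi>)/(g*t)" using a gt by simp
    moreover have "0 \<le> g*\<xi>/(1-g*t)" using c g x by simp
    ultimately show ?thesis using 1 t x by (simp add: u_expl_def)
  next
    case 2
    then have a: "g*\<xi> > 1 - g*t" "g*\<xi> \<le> 1" using g by (auto simp: field_simps)
    then have "1 < g*\<xi>/(1-g*t)" using c by simp
    moreover have "(1-g*\<xi>)/(g*t) < 1" using a gt by simp
    moreover have "0 \<le> (1-g*\<xi>)/(g*t)" using a gt by simp
    ultimately show ?thesis using 2 t x by (simp add: u_expl_def)
  next
    case 3
    then have a: "g*\<xi> > 1" using g by (auto simp: field_simps)
    then have "(1-g*\<xi>)/(g*t) < 0" using gt by (simp add: divide_neg_pos)
    then show ?thesis using 3 g by (simp add: u_big')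
  qed
qed

lemma u_closed_big:
  assumes g: "g > 0" and t: "t \<ge> 1/g" and x: "\<xi> > 0"
  shows "u_expl g \<xi> t = (max 0 ((1-g*\<xi>)/(g*t))) powr (1/g)"
proof -
  have t0: "t > 0" using g t by (smt (verit) divide_pos_pos)
  have gt: "g*t > 0" using g t0 by simp
  show ?thesis
  proof (cases "\<xi> \<le> 1/g")
    case True
    then have "0 \<le> (1-g*\<xi>)/(g*t)" using g gt by (simp add: field_simps)
    then show ?thesis using True t x g by (simp add: u_expl_def)
  next
    case False
    then have a: "g*\<xi> > 1" using g by (auto simp: field_simps)
    then have "(1-g*\<xi>)/(g*t) < 0" using gt by (simp add: divide_neg_pos)
    then show ?thesis using False g by (simp add: u_big')
  qed
qed

lemma ev_gt: "(a::real) < x \<Longrightarrow> eventually (\<lambda>y. a < y) (nhds x)"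
  using eventually_nhds_in_open[of "{a<..}" x] by simp

lemma ev_lt: "(x::real) < a \<Longrightarrow> eventually (\<lambda>y. y < a) (nhds x)"
  using eventually_nhds_in_open[of "{..<a}" x] by simp

lemma u_isCont:
  assumes g: "g > 0" and t: "t > 0" and x: "\<xi>0 > 0"
  shows "isCont (\<lambda>\<xi>. u_expl g \<xi> t) \<xi>0"
proof (cases "t < 1/g")
  case True
  have ev: "eventually (\<lambda>\<xi>. u_expl g \<xi> t = (max 0 (min (g*\<xi>/(1-g*t)) ((1-g*\<xi>)/(g*t)))) powr (1/g)) (nhds \<xi>0)"
    using ev_gt[OF x] by (rule eventually_mono) (use u_closed_small[OF g t True] in auto)
  have "isCont (\<lambda>\<xi>. (max 0 (min (g*\<xi>/(1-g*t)) ((1-g*\<xi>)/(g*t)))) powr (1/g)) \<xi>0"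
    using g t True by (intro continuous_powr_real continuous_intros) (auto simp: field_simps)
  then show ?thesis using isCont_cong[OF ev] by simp
next
  case False
  have ev: "eventually (\<lambda>\<xi>. u_expl g \<xi> t = (max 0 ((1-g*\<xi>)/(g*t))) powr (1/g)) (nhds \<xi>0)"
    using ev_gt[OF x] by (rule eventually_mono) (use u_closed_big[of g t] g False in auto)
  have "isCont (\<lambda>\<xi>. (max 0 ((1-g*\<xi>)/(g*t))) powr (1/g)) \<xi>0"
    using g t by (intro continuous_powr_real continuous_intros) auto
  then show ?thesis using isCont_cong[OF ev] by simp
qed

lemma Lim_isCont_left: "isCont f x \<Longrightarrow> Lim (at_left x) f = f (x::real)"
  by (rule tendsto_Lim) (auto simp: isCont_def intro: tendsto_mono[OF at_le])

lemma Lim_isCont_right: "isCont f x \<Longrightarrow> Lim (at_right x) f = f (x::real)"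
  by (rule tendsto_Lim) (auto simp: isCont_def intro: tendsto_mono[OF at_le])

lemma entropy_lims:
  assumes g: "g > 0"
  shows "\<forall>t>0. \<forall>\<xi>0.
        (\<xi>0 < 0 \<longrightarrow> Lim (at_left \<xi>0) (\<lambda>\<xi>. u_expl g \<xi> t) \<ge> Lim (at_right \<xi>0) (\<lambda>\<xi>. u_expl g \<xi> t)) \<and>
        (\<xi>0 > 0 \<longrightarrow> Lim (at_left \<xi>0) (\<lambda>\<xi>. u_expl g \<xi> t) \<le> Lim (at_right \<xi>0) (\<lambda>\<xi>. u_expl g \<xi> t))"
proof (intro allI impI conjI)
  fix t \<xi>0 :: real assume t: "t > 0"
  {
    assume x: "\<xi>0 < 0"
    have ev: "eventually (\<lambda>\<xi>. u_expl g \<xi> t = 0) (nhds \<xi>0)"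
      using ev_lt[OF x] by (rule eventually_mono) (auto simp: u_neg_xi)
    have "isCont (\<lambda>\<xi>. u_expl g \<xi> t) \<xi>0" using isCont_cong[OF ev] by simp
    then show "Lim (at_left \<xi>0) (\<lambda>\<xi>. u_expl g \<xi> t) \<ge> Lim (at_right \<xi>0) (\<lambda>\<xi>. u_expl g \<xi> t)"
      by (simp add: Lim_isCont_left Lim_isCont_right)
  }
  {
    assume x: "\<xi>0 > 0"
    have "isCont (\<lambda>\<xi>. u_expl g \<xi> t) \<xi>0" using u_isCont[OF g t x] .
    then show "Lim (at_left \<xi>0) (\<lambda>\<xi>. u_expl g \<xi> t) \<le> Lim (at_right \<xi>0) (\<lambda>\<xi>. u_expl g \<xi> t)"
      by (simp add: Lim_isCont_left Lim_isCont_right)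
  }
qed


lemma variation_bound:
  fixes f P N :: "real \<Rightarrow> real"
  assumes fe: "\<And>x. f x = P x - N x" and mP: "mono P" and mN: "mono N"
    and bP: "\<And>x. 0 \<le> P x \<and> P x \<le> B" and bN: "\<And>x. 0 \<le> N x \<and> N x \<le> B"
    and s: "sorted xs"
  shows "variation_sum f xs \<le> 2*B"
proof -
  let ?n = "length xs - 1"
  have step: "\<bar>f (xs ! Suc i) - f (xs ! i)\<bar> \<le> (P (xs ! Suc i) - P (xs ! i)) + (N (xs ! Suc i) - N (xs ! i))"
    if i: "i < ?n" for i
  proof -
    have "xs ! i \<le> xs ! Suc i" using s i by (simp add: sorted_iff_nth_mono)
    then have "P (xs ! i) \<le> P (xs ! Suc i)" "N (xs ! i) \<le> N (xs ! Suc i)" using mP mN by (auto dest: monoD)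
    then show ?thesis unfolding fe by linarith
  qed
  have "variation_sum f xs \<le> (\<Sum>i<?n. (P (xs ! Suc i) - P (xs ! i)) + (N (xs ! Suc i) - N (xs ! i)))"
    unfolding variation_sum_def by (rule sum_mono) (use step in auto)
  also have "\<dots> = (P (xs ! ?n) - P (xs ! 0)) + (N (xs ! ?n) - N (xs ! 0))"
    using sum_lessThan_telescope[of "\<lambda>i. P (xs ! i)" ?n] sum_lessThan_telescope[of "\<lambda>i. N (xs ! i)" ?n]
    by (simp add: sum.distrib)
  also have "\<dots> \<le> 2*B" using bP[of "xs ! ?n"] bP[of "xs ! 0"] bN[of "xs ! ?n"] bN[of "xs ! 0"] by linarith
  finally show ?thesis .
qed

definition mpt :: "real \<Rightarrow> real \<Rightarrow> real" where "mpt g t = max 0 (1/g - t)"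

lemma u_mono_left:
  assumes g: "g > 0" and t: "t \<ge> 0" and le: "\<xi> \<le> \<xi>'" "\<xi>' \<le> mpt g t"
  shows "u_expl g \<xi> t \<le> u_expl g \<xi>' t"
proof (cases "\<xi> < 0")
  case True then show ?thesis by (simp add: u_neg_xi u_nonneg)
next
  case False
  show ?thesis
  proof (cases "mpt g t = 0")
    case True
    then have "\<xi> = \<xi>'" using False le by auto
    then show ?thesis by simp
  next
    case m: False
    then have m: "mpt g t = 1/g - t" "t < 1/g" by (auto simp: mpt_def)
    have c: "1 - g*t > 0" using m g by (simp add: field_simps)
    have "(g*\<xi>) powr (1/g) / (1 - g*t) powr (1/g) \<le> (g*\<xi>') powr (1/g) / (1 - g*t) powr (1/g)"
      using False le g by (intro divide_right_mono powr_mono2) auto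
    then show ?thesis using u_reg1[OF g, of \<xi> t] u_reg1[OF g, of \<xi>' t] False le m t by auto
  qed
qed

lemma u_mono_right:
  assumes g: "g > 0" and t: "t \<ge> 0" and le: "mpt g t \<le> \<xi>" "\<xi> \<le> \<xi>'"
  shows "u_expl g \<xi>' t \<le> u_expl g \<xi> t"
proof (cases "\<xi>' > 1/g")
  case True then show ?thesis using g by (simp add: u_big' u_nonneg)
next
  case False
  show ?thesis
  proof (cases "t = 0")
    case True
    then have "\<xi> = \<xi>'" using le False by (auto simp: mpt_def)
    then show ?thesis by simp
  next
    case t0: False
    then have t0: "t > 0" using t by simp
    have h: "0 \<le> \<xi>" "1/g - t \<le> \<xi>" using le by (auto simp: mpt_def)
    have "(1 - g*\<xi>') powr (1/g) / (g*t) powr (1/g) \<le> (1 - g*\<xi>) powr (1/g) / (g*t) powr (1/g)"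
      using False le g h by (intro divide_right_mono powr_mono2) (auto simp: field_simps)
    then show ?thesis using u_reg2[OF g t0, of \<xi>] u_reg2[OF g t0, of \<xi>'] False le h by auto
  qed
qed

lemma u_variation:
  assumes g: "g > 0" and t: "t \<ge> 0" and s: "sorted xs"
  shows "variation_sum (\<lambda>\<xi>. u_expl g \<xi> t) xs \<le> 2"
proof -
  define m where "m = mpt g t"
  define P where "P x = u_expl g (min x m) t" for x
  define N where "N x = u_expl g m t - u_expl g (max x m) t" for x
  have fe: "u_expl g x t = P x - N x" for x by (cases "x \<le> m") (auto simp: P_def N_def)
  have mP: "mono P" unfolding mono_def P_def
    using u_mono_left[OF g t] by (auto simp: m_def)
  have mN: "mono N" unfolding mono_def N_def
    using u_mono_right[OF g t] by (auto simp: m_def intro!: diff_left_mono)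
  have bP: "0 \<le> P x \<and> P x \<le> 1" for x using u_nonneg u_le1[OF g] by (auto simp: P_def)
  have bN: "0 \<le> N x \<and> N x \<le> 1" for x
    using u_nonneg[of g "max x m" t] u_le1[OF g, of m t] u_mono_right[OF g t, of m "max x m"]
    by (auto simp: N_def m_def)
  have "variation_sum (\<lambda>\<xi>. u_expl g \<xi> t) xs \<le> 2*1"
    by (rule variation_bound[OF fe mP mN bP bN s])
  then show ?thesis by simp
qed


lemma u_slice_meas: "(\<lambda>\<xi>. u_expl g \<xi> t) \<in> borel_measurable borel"
proof -
  have "(\<lambda>\<xi>. (\<xi>, t)) \<in> borel_measurable borel" by (intro borel_measurable_continuous_onI continuous_intros)
  from measurable_compose[OF this u_meas[of g]] show ?thesis by simp
qed

lemma u_le_ind: "g > 0 \<Longrightarrow> \<bar>u_expl g \<xi> t\<bar> \<le> indicator {0..1/g} \<xi>"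
  using u_nonneg[of g \<xi> t] u_le1[of g \<xi> t] u_neg_xi[of \<xi> g t] u_big'[of g \<xi> t]
  by (auto simp: indicator_def not_le)

lemma u_slice_int: assumes g: "g > 0" shows "integrable lborel (\<lambda>\<xi>. u_expl g \<xi> t)"
proof -
  have i: "integrable lborel (indicator {0..1/g} :: real \<Rightarrow> real)" by (rule integrable_real_indicator) (use g in auto)
  show ?thesis
    by (rule Bochner_Integration.integrable_bound[OF i]) (auto simp: u_slice_meas u_le_ind g)
qed

lemma u_L1: assumes g: "g > 0" shows "(\<integral>\<xi>. \<bar>u_expl g \<xi> t\<bar> \<partial>lborel) \<le> 1/g"
proof -
  have "(\<integral>\<xi>. \<bar>u_expl g \<xi> t\<bar> \<partial>lborel) \<le> (\<integral>\<xi>. indicator {0..1/g} \<xi> \<partial>lborel)"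
    using g by (intro integral_mono) (auto simp: u_slice_int u_le_ind)
  also have "\<dots> = 1/g" using g by simp
  finally show ?thesis .
qed

lemma u_Linf: assumes g: "g > 0" shows "Linf_L1_BV (u_expl g)"
  unfolding Linf_L1_BV_def
proof (intro conjI exI[of _ "1/g + 2"] allI impI)
  show "(\<lambda>p. u_expl g (fst p) (snd p)) \<in> borel_measurable borel" by (rule u_meas)
  fix t :: real assume t: "0 \<le> t"
  show "integrable lborel (\<lambda>\<xi>. u_expl g \<xi> t)" using g by (rule u_slice_int)
  show "(\<integral>\<xi>. \<bar>u_expl g \<xi> t\<bar> \<partial>lborel) \<le> 1/g + 2" using u_L1[OF g, of t] by simp
  fix xs :: "real list" assume "sorted xs"
  then show "variation_sum (\<lambda>\<xi>. u_expl g \<xi> t) xs \<le> 1/g + 2"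
    using u_variation[OF g t] g by (smt (verit) divide_pos_pos)
qed

lemma flux0: "flux g 0 = 0"
  by (simp add: flux_def)

lemma weak_neg: assumes g: "g > 0" shows "weak_sol_neg g (uI_of g (indicator {0 .. 1 / (1 + g)})) (u_expl g)"
  unfolding weak_sol_neg_def
proof (intro allI impI)
  fix \<phi> phx pht :: "real \<times> real \<Rightarrow> real"
  have a: "(\<lambda>p. indicator {p. fst p < 0 \<and> snd p \<ge> 0} p *\<^sub>R
      (u_expl g (fst p) (snd p) * pht p + flux g (u_expl g (fst p) (snd p)) * phx p)) = (\<lambda>p. 0)"
    by (auto simp: indicator_def u_neg_xi flux0)
  have b: "(\<lambda>\<xi>. indicator {..<0} \<xi> *\<^sub>R (uI_of g (indicator {0 .. 1 / (1 + g)}) \<xi> * \<phi> (\<xi>, 0))) = (\<lambda>\<xi>. 0)"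
    using g by (auto simp: uI_formula indicator_def)
  show "(LINT p : {p. fst p < 0 \<and> snd p \<ge> 0} | lborel.
            u_expl g (fst p) (snd p) * pht p + flux g (u_expl g (fst p) (snd p)) * phx p)
        + (LINT \<xi> : {..<0} | lborel. uI_of g (indicator {0 .. 1 / (1 + g)}) \<xi> * \<phi> (\<xi>, 0)) = 0"
    unfolding set_lebesgue_integral_def a b by simp
qed


locale tf =
  fixes \<phi> phx pht :: "real \<times> real \<Rightarrow> real"
  assumes tf: "test_fun {p. fst p > 0} \<phi> phx pht"
begin

lemma dx: "((\<lambda>s. \<phi> (s, t)) has_real_derivative phx (\<xi>, t)) (at \<xi>)"
  using tf by (simp add: test_fun_def)

lemma dt: "((\<lambda>s. \<phi> (\<xi>, s)) has_real_derivative pht (\<xi>, t)) (at t)"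
  using tf by (simp add: test_fun_def)

lemma cx: "continuous_on UNIV phx" and ct: "continuous_on UNIV pht"
  using tf by (auto simp: test_fun_def)

definition K where "K = closure {p. \<phi> p \<noteq> 0}"

lemma K: "compact K" "K \<subseteq> {p. fst p > 0}" "closed K"
  using tf by (auto simp: test_fun_def K_def)

lemma phi_K: "p \<notin> K \<Longrightarrow> \<phi> p = 0"
  using closure_subset[of "{p. \<phi> p \<noteq> 0}"] by (auto simp: K_def)

lemma phx_K: assumes "p \<notin> K" shows "phx p = 0"
proof -
  obtain \<xi> t where p: "p = (\<xi>, t)" by (cases p)
  have "open ((\<lambda>s. (s, t)) -` (- K))"
    using K(3) by (intro continuous_open_vimage) (auto intro!: continuous_intros)
  then have o: "open {s. (s, t) \<in> - K}" by (simp add: vimage_def)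
  have d0: "((\<lambda>s. 0::real) has_real_derivative 0) (at \<xi>)" by simp
  have "((\<lambda>s. \<phi> (s, t)) has_real_derivative 0) (at \<xi>)"
    by (rule has_field_derivative_transform_within_open[OF d0 o]) (use assms p phi_K in auto)
  then show ?thesis using DERIV_unique[OF dx] p by auto
qed

lemma pht_K: assumes "p \<notin> K" shows "pht p = 0"
proof -
  obtain \<xi> t where p: "p = (\<xi>, t)" by (cases p)
  have "open ((\<lambda>s. (\<xi>, s)) -` (- K))"
    using K(3) by (intro continuous_open_vimage) (auto intro!: continuous_intros)
  then have o: "open {s. (\<xi>, s) \<in> - K}" by (simp add: vimage_def)
  have d0: "((\<lambda>s. 0::real) has_real_derivative 0) (at t)" by simp
  have "((\<lambda>s. \<phi> (\<xi>, s)) has_real_derivative 0) (at t)"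
    by (rule has_field_derivative_transform_within_open[OF d0 o]) (use assms p phi_K in auto)
  then show ?thesis using DERIV_unique[OF dt] p by auto
qed

lemma box_exists: "\<exists>a R. 0 < a \<and> 0 < R \<and> (\<forall>p\<in>K. a \<le> fst p \<and> fst p \<le> R \<and> \<bar>snd p\<bar> \<le> R)"
proof -
  obtain R where R: "R > 0" "\<forall>p\<in>K. norm p \<le> R"
    using compact_imp_bounded[OF K(1)] by (auto simp: bounded_pos)
  obtain a where a: "a > 0" "\<forall>p\<in>K. a \<le> fst p"
  proof (cases "K = {}")
    case True then show ?thesis using that[of 1] by auto
  next
    case False
    obtain q where q: "q \<in> K" "\<forall>p\<in>K. fst q \<le> fst p"
    proof -
      have "continuous_on K fst" by (intro continuous_intros)
      then show ?thesis using continuous_attains_inf[OF K(1) False, of fst] that by blast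
    qed
    show ?thesis using that[of "fst q"] q K(2) by auto
  qed
  have "\<forall>p\<in>K. a \<le> fst p \<and> fst p \<le> R \<and> \<bar>snd p\<bar> \<le> R"
  proof
    fix p assume p: "p \<in> K"
    have "\<bar>fst p\<bar> \<le> norm p" "\<bar>snd p\<bar> \<le> norm p"
      using norm_fst_le[of "fst p" "snd p"] norm_snd_le[of "snd p" "fst p"] by auto
    then show "a \<le> fst p \<and> fst p \<le> R \<and> \<bar>snd p\<bar> \<le> R" using p a R by auto
  qed
  then show ?thesis using a R by blast
qed

lemma bound_cont:
  fixes f :: "real \<times> real \<Rightarrow> real"
  assumes "continuous_on UNIV f" "\<And>p. p \<notin> K \<Longrightarrow> f p = 0"
  shows "\<exists>B>0. \<forall>p. \<bar>f p\<bar> \<le> B"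
proof -
  have "bounded (f ` K)"
    by (rule compact_imp_bounded, rule compact_continuous_image) (use assms(1) K(1) continuous_on_subset in auto)
  then obtain B where B: "B > 0" "\<forall>x\<in>f ` K. norm x \<le> B" by (auto simp: bounded_pos)
  have "\<forall>p. \<bar>f p\<bar> \<le> B" using B assms(2) by (metis image_eqI less_eq_real_def abs_zero real_norm_def)
  then show ?thesis using B by blast
qed

lemma phi_lip: assumes B: "\<forall>p. \<bar>phx p\<bar> \<le> B"
  shows "\<bar>\<phi> (x, t) - \<phi> (y, t)\<bar> \<le> B * \<bar>x - y\<bar>"
proof -
  have "norm ((\<lambda>s. \<phi> (s, t)) x - (\<lambda>s. \<phi> (s, t)) y) \<le> B * norm (x - y)"
    by (rule field_differentiable_bound[of UNIV _ "\<lambda>s. phx (s, t)"])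
       (use B dx in \<open>auto intro: has_field_derivative_at_within\<close>)
  then show ?thesis by simp
qed

lemma phi_cont: "continuous_on UNIV \<phi>"
proof -
  obtain B where B: "B > 0" "\<forall>p. \<bar>phx p\<bar> \<le> B" using bound_cont[OF cx phx_K] by auto
  have "isCont \<phi> p0" for p0
  proof -
    obtain x0 t0 where p0: "p0 = (x0, t0)" by (cases p0)
    have c1: "((\<lambda>p. \<phi> (x0, snd p)) \<longlongrightarrow> \<phi> (x0, t0)) (at p0)"
    proof -
      have "isCont (\<lambda>s. \<phi> (x0, s)) t0" using dt by (rule DERIV_isCont)
      then have "isCont (\<lambda>p. \<phi> (x0, snd p)) p0"
        using isCont_o2[where f=snd and a=p0 and g="\<lambda>s. \<phi> (x0, s)"] p0 by (auto intro: continuous_intros)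
      then show ?thesis using p0 by (simp add: isCont_def)
    qed
    have c2: "((\<lambda>p. \<phi> p - \<phi> (x0, snd p)) \<longlongrightarrow> 0) (at p0)"
    proof (rule Lim_null_comparison)
      show "\<forall>\<^sub>F p in at p0. norm (\<phi> p - \<phi> (x0, snd p)) \<le> B * \<bar>fst p - x0\<bar>"
        using phi_lip[OF B(2)] by (intro always_eventually allI) (metis prod.collapse real_norm_def)
      have "((\<lambda>p. B * \<bar>fst p - x0\<bar>) \<longlongrightarrow> B * \<bar>fst p0 - x0\<bar>) (at p0)"
        by (intro tendsto_intros)
      then show "((\<lambda>p. B * \<bar>fst p - x0\<bar>) \<longlongrightarrow> 0) (at p0)" using p0 by simp
    qed
    have "((\<lambda>p. (\<phi> p - \<phi> (x0, snd p)) + \<phi> (x0, snd p)) \<longlongrightarrow> 0 + \<phi> (x0, t0)) (at p0)"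
      by (rule tendsto_add[OF c2 c1])
    then show ?thesis using p0 by (simp add: isCont_def)
  qed
  then show ?thesis by (simp add: continuous_at_imp_continuous_on)
qed

end


definition vexpl :: "real \<Rightarrow> real \<Rightarrow> real \<Rightarrow> real" where
  "vexpl g \<xi> t = (if 0 < \<xi> \<and> \<xi> < 1/g - t \<and> 0 \<le> t then u_expl g \<xi> t / (1 - g*t)
     else if 1/g - t < \<xi> \<and> \<xi> < 1/g \<and> 0 < t then - u_expl g \<xi> t / (g*t) else 0)"

definition A1 :: "real \<Rightarrow> real \<Rightarrow> real \<Rightarrow> real" where
  "A1 g \<xi> t = (g*\<xi>) powr (1/g) * (1 - g*t) powr (-1/g)"
definition A2 :: "real \<Rightarrow> real \<Rightarrow> real \<Rightarrow> real" where
  "A2 g \<xi> t = (1 - g*\<xi>) powr (1/g) * (g*t) powr (-1/g)"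
definition B1 :: "real \<Rightarrow> real \<Rightarrow> real \<Rightarrow> real" where
  "B1 g \<xi> t = (g*\<xi>) powr ((1+g)/g) * (1 - g*t) powr (-(1+g)/g) / (1+g)"
definition B2 :: "real \<Rightarrow> real \<Rightarrow> real \<Rightarrow> real" where
  "B2 g \<xi> t = (1 - g*\<xi>) powr ((1+g)/g) * (g*t) powr (-(1+g)/g) / (1+g)"

lemma u_A1:
  assumes g: "g > 0" and "0 \<le> \<xi>" "\<xi> \<le> 1/g - t" "0 \<le> t" "t < 1/g"
  shows "u_expl g \<xi> t = A1 g \<xi> t"
proof -
  have "1 - g*t > 0" using assms by (simp add: field_simps)
  then show ?thesis using u_reg1[OF assms] by (simp add: A1_def powr_minus_divide)
qed

lemma u_A2:
  assumes g: "g > 0" and "0 < t" "0 \<le> \<xi>" "1/g - t \<le> \<xi>" "\<xi> \<le> 1/g"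
  shows "u_expl g \<xi> t = A2 g \<xi> t"
  using u_reg2[OF assms] assms by (simp add: A2_def powr_minus_divide)

lemma flux_A1:
  assumes g: "g > 0" and "0 \<le> \<xi>" and "1 - g*t > 0"
  shows "flux g (A1 g \<xi> t) = B1 g \<xi> t"
proof -
  have "\<bar>A1 g \<xi> t\<bar> = A1 g \<xi> t" by (simp add: A1_def)
  moreover have "(A1 g \<xi> t) powr (1+g) = (g*\<xi>) powr ((1+g)/g) * (1 - g*t) powr (-(1+g)/g)"
  proof -
    have e1: "1/g * (1+g) = (1+g)/g" and e2: "-1/g * (1+g) = -(1+g)/g"
      and e3: "(- 1 - g)/g = -((1+g)/g)" using g by (auto simp: field_simps)
    show ?thesis unfolding A1_def using assms
      by (simp add: powr_mult powr_powr e1 e2 e3 del: minus_divide_left)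
  qed
  ultimately show ?thesis by (simp add: flux_def B1_def)
qed

lemma flux_A2:
  assumes g: "g > 0" and "1 - g*\<xi> \<ge> 0" and "t > 0"
  shows "flux g (A2 g \<xi> t) = B2 g \<xi> t"
proof -
  have "\<bar>A2 g \<xi> t\<bar> = A2 g \<xi> t" by (simp add: A2_def)
  moreover have "(A2 g \<xi> t) powr (1+g) = (1 - g*\<xi>) powr ((1+g)/g) * (g*t) powr (-(1+g)/g)"
  proof -
    have e1: "1/g * (1+g) = (1+g)/g" and e2: "-1/g * (1+g) = -(1+g)/g"
      and e3: "(- 1 - g)/g = -((1+g)/g)" using g by (auto simp: field_simps)
    show ?thesis unfolding A2_def using assms
      by (simp add: powr_mult powr_powr e1 e2 e3 del: minus_divide_left)
  qed
  ultimately show ?thesis by (simp add: flux_def B2_def)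
qed


lemma dA1_t:
  assumes g: "g > 0" and c: "1 - g*t > 0"
  shows "((\<lambda>s. A1 g \<xi> s) has_real_derivative A1 g \<xi> t / (1 - g*t)) (at t)"
proof -
  have d: "((\<lambda>s. A1 g \<xi> s) has_real_derivative
      (g*\<xi>) powr (1/g) * ((-1/g) * (1 - g*t) powr (-1/g - 1) * (- g))) (at t)"
    unfolding A1_def using c by (auto intro!: derivative_eq_intros)
  have "(g*\<xi>) powr (1/g) * ((-1/g) * (1 - g*t) powr (-1/g - 1) * (- g)) = A1 g \<xi> t / (1 - g*t)"
    using g c by (simp add: A1_def powr_diff)
  then show ?thesis using d by simp
qed

lemma dA2_t:
  assumes g: "g > 0" and t: "t > 0"
  shows "((\<lambda>s. A2 g \<xi> s) has_real_derivative - A2 g \<xi> t / (g*t)) (at t)"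
proof -
  have d: "((\<lambda>s. A2 g \<xi> s) has_real_derivative
      (1 - g*\<xi>) powr (1/g) * ((-1/g) * (g*t) powr (-1/g - 1) * g)) (at t)"
    unfolding A2_def using g t by (auto intro!: derivative_eq_intros)
  have "(1 - g*\<xi>) powr (1/g) * ((-1/g) * (g*t) powr (-1/g - 1) * g) = - A2 g \<xi> t / (g*t)"
    using g t by (simp add: A2_def powr_diff)
  then show ?thesis using d by simp
qed

lemma dB1_x:
  assumes g: "g > 0" and x: "\<xi> > 0" and c: "1 - g*t > 0"
  shows "((\<lambda>s. B1 g s t) has_real_derivative A1 g \<xi> t / (1 - g*t)) (at \<xi>)"
proof -
  have d: "((\<lambda>s. B1 g s t) has_real_derivative
      ((1+g)/g) * (g*\<xi>) powr ((1+g)/g - 1) * g * (1 - g*t) powr (-(1+g)/g) / (1+g)) (at \<xi>)"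
    unfolding B1_def using g x by (auto intro!: derivative_eq_intros)
  have e: "(1+g)/g - 1 = 1/g" "-(1+g)/g = -1/g - 1" using g by (auto simp: field_simps)
  have "((1+g)/g) * (g*\<xi>) powr ((1+g)/g - 1) * g * (1 - g*t) powr (-(1+g)/g) / (1+g)
      = (g*\<xi>) powr (1/g) * (1 - g*t) powr (-1/g - 1)"
  proof -
    have aux: "\<And>X Y. (1+g)/g * X * g * Y / (1+g) = X * Y"
      using g by (simp add: divide_simps)
    show ?thesis unfolding e aux ..
  qed
  also have "\<dots> = A1 g \<xi> t / (1 - g*t)" using c by (simp add: A1_def powr_diff)
  finally show ?thesis using d by simp
qed

lemma dB2_x:
  assumes g: "g > 0" and x: "1 - g*\<xi> > 0" and t: "t > 0"
  shows "((\<lambda>s. B2 g s t) has_real_derivative - A2 g \<xi> t / (g*t)) (at \<xi>)"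
proof -
  have d: "((\<lambda>s. B2 g s t) has_real_derivative
      ((1+g)/g) * (1 - g*\<xi>) powr ((1+g)/g - 1) * (- g) * (g*t) powr (-(1+g)/g) / (1+g)) (at \<xi>)"
    unfolding B2_def using g x by (auto intro!: derivative_eq_intros)
  have e: "(1+g)/g - 1 = 1/g" "-(1+g)/g = -1/g - 1" using g by (auto simp: field_simps)
  have "((1+g)/g) * (1 - g*\<xi>) powr ((1+g)/g - 1) * (- g) * (g*t) powr (-(1+g)/g) / (1+g)
      = - ((1 - g*\<xi>) powr (1/g) * (g*t) powr (-1/g - 1))"
  proof -
    have aux: "\<And>X Y. (1+g)/g * X * (- g) * Y / (1+g) = - (X * Y)"
      using g by (simp add: divide_simps)
    show ?thesis unfolding e aux ..
  qed
  also have "\<dots> = - A2 g \<xi> t / (g*t)" using g t by (simp add: A2_def powr_diff)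
  finally show ?thesis using d by simp
qed


lemma v_reg1: "0 < \<xi> \<Longrightarrow> \<xi> < 1/g - t \<Longrightarrow> 0 \<le> t \<Longrightarrow> vexpl g \<xi> t = u_expl g \<xi> t / (1 - g*t)"
  by (simp add: vexpl_def)

lemma v_reg2: "1/g - t < \<xi> \<Longrightarrow> \<xi> < 1/g \<Longrightarrow> 0 < t \<Longrightarrow> vexpl g \<xi> t = - u_expl g \<xi> t / (g*t)"
  by (simp add: vexpl_def)

lemma v_big: "g > 0 \<Longrightarrow> \<xi> \<ge> 1/g \<Longrightarrow> vexpl g \<xi> t = 0"
  by (auto simp: vexpl_def)

lemma v_neg_xi: "\<xi> < 0 \<Longrightarrow> g > 0 \<Longrightarrow> vexpl g \<xi> t = 0"
  by (auto simp: vexpl_def u_neg_xi)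

lemma aux_c: fixes g \<xi> t :: real assumes "g > 0" "0 < \<xi>" "\<xi> < 1/g - t" shows "1 - g*t > 0"
proof -
  have "g*\<xi> < g*(1/g - t)" using mult_strict_left_mono[OF assms(3) assms(1)] by simp
  then have "g*\<xi> < 1 - g*t" using assms by (simp add: right_diff_distrib)
  moreover have "0 < g*\<xi>" using assms by simp
  ultimately show ?thesis by linarith
qed

lemma dA1_t_v:
  assumes g: "g > 0" and x: "0 < \<xi>" and t: "0 < t" "t < 1/g - \<xi>"
  shows "((\<lambda>s. A1 g \<xi> s) has_real_derivative vexpl g \<xi> t) (at t)"
proof -
  have c: "1 - g*t > 0" using aux_c[OF g x] t by simp
  have "t < 1/g" using x t by simp
  then have "u_expl g \<xi> t = A1 g \<xi> t" using u_A1[OF g, of \<xi> t] x t by simp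
  then show ?thesis using dA1_t[OF g c, of \<xi>] v_reg1[of \<xi> g t] x t by simp
qed

lemma dA2_t_v:
  assumes g: "g > 0" and x: "0 < \<xi>" "\<xi> < 1/g" and t: "t > 1/g - \<xi>"
  shows "((\<lambda>s. A2 g \<xi> s) has_real_derivative vexpl g \<xi> t) (at t)"
proof -
  have t0: "t > 0" using x t by simp
  have "u_expl g \<xi> t = A2 g \<xi> t" using u_A2[OF g t0] x t by simp
  then show ?thesis using dA2_t[OF g t0, of \<xi>] v_reg2[of g t \<xi>] x t t0 by simp
qed

lemma dflux_x:
  assumes g: "g > 0" and t: "t > 0" and x: "\<xi> > 0" "\<xi> \<noteq> 1/g - t" "\<xi> \<noteq> 1/g"
  shows "((\<lambda>s. flux g (u_expl g s t)) has_real_derivative vexpl g \<xi> t) (at \<xi>)"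
proof -
  consider "\<xi> < 1/g - t" | "1/g - t < \<xi>" "\<xi> < 1/g" | "\<xi> > 1/g" using x by linarith
  then show ?thesis
  proof cases
    case 1
    have c: "1 - g*t > 0" using aux_c[OF g x(1) 1] .
    have eq: "flux g (u_expl g s t) = B1 g s t" if "s \<in> {0<..<1/g - t}" for s
      using that u_A1[OF g, of s t] flux_A1[OF g _ c, of s] t by (auto simp: field_simps)
    have "((\<lambda>s. B1 g s t) has_real_derivative A1 g \<xi> t / (1 - g*t)) (at \<xi>)" by (rule dB1_x[OF g x(1) c])
    moreover have "A1 g \<xi> t / (1 - g*t) = vexpl g \<xi> t"
      using eq[of \<xi>] u_A1[OF g, of \<xi> t] v_reg1[of \<xi> g t] 1 x t c by (simp add: field_simps)
    ultimately have "((\<lambda>s. B1 g s t) has_real_derivative vexpl g \<xi> t) (at \<xi>)" by simp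
    then show ?thesis
      by (rule has_field_derivative_transform_within_open[of _ _ _ "{0<..<1/g - t}"]) (use 1 x eq in auto)
  next
    case 2
    have c: "1 - g*\<xi> > 0" using 2 g by (simp add: field_simps)
    have eq: "flux g (u_expl g s t) = B2 g s t" if "s \<in> {0<..<1/g} \<inter> {1/g - t<..}" for s
    proof -
      have "0 \<le> 1 - g * s" using that g by (simp add: field_simps)
      then show ?thesis using that u_A2[OF g t, of s] flux_A2[OF g _ t, of s] by auto
    qed
    have "((\<lambda>s. B2 g s t) has_real_derivative - A2 g \<xi> t / (g*t)) (at \<xi>)" by (rule dB2_x[OF g c t])
    moreover have "- A2 g \<xi> t / (g*t) = vexpl g \<xi> t"
      using u_A2[OF g t, of \<xi>] v_reg2[of g t \<xi>] 2 x t by simp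
    ultimately have "((\<lambda>s. B2 g s t) has_real_derivative vexpl g \<xi> t) (at \<xi>)" by simp
    then show ?thesis
      by (rule has_field_derivative_transform_within_open[of _ _ _ "{0<..<1/g} \<inter> {1/g - t<..}"]) (use 2 x eq in auto)
  next
    case 3
    have "((\<lambda>s. 0) has_real_derivative 0) (at \<xi>)" by simp
    then have "((\<lambda>s. flux g (u_expl g s t)) has_real_derivative 0) (at \<xi>)"
      by (rule has_field_derivative_transform_within_open[of _ _ _ "{1/g<..}"]) (use 3 g in \<open>auto simp: u_big' flux_def\<close>)
    then show ?thesis using v_big[OF g, of \<xi> t] 3 by simp
  qed
qed


lemma hk_to_lebesgue:
  fixes f :: "real \<Rightarrow> real"
  assumes I: "(f has_integral I) {\<alpha>..\<beta>}" and m: "f \<in> borel_measurable borel"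
    and B: "\<And>x. x \<in> {\<alpha>..\<beta>} \<Longrightarrow> \<bar>f x\<bar> \<le> B"
  shows "(\<integral>x. indicator {\<alpha>..\<beta>} x * f x \<partial>lborel) = I"
proof -
  have si: "set_integrable lborel {\<alpha>..\<beta>} f"
    unfolding set_integrable_def
  proof (rule Bochner_Integration.integrable_bound[of _ "\<lambda>x. B * indicator {\<alpha>..\<beta>} x :: real"])
    show "integrable lborel (\<lambda>x. B * indicator {\<alpha>..\<beta>} x :: real)"
      by (intro integrable_mult_right) (auto intro!: integrable_real_indicator simp: emeasure_lborel_Icc_eq)
    show "(\<lambda>x. indicator {\<alpha>..\<beta>} x *\<^sub>R f x) \<in> borel_measurable lborel" using m by measurable
    show "AE x in lborel. norm (indicator {\<alpha>..\<beta>} x *\<^sub>R f x) \<le> norm (B * indicator {\<alpha>..\<beta>} x :: real)"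
      using B by (intro AE_I2) (auto simp: indicator_def intro: order_trans[OF _ abs_ge_self])
  qed
  have "(LINT x : {\<alpha>..\<beta>} | lborel. f x) = integral {\<alpha>..\<beta>} f"
    by (rule set_borel_integral_eq_integral(2)[OF si])
  also have "\<dots> = I" using I by (rule integral_unique)
  finally show ?thesis by (simp add: set_lebesgue_integral_def)
qed

lemma v_meas: "(\<lambda>p. vexpl g (fst p) (snd p)) \<in> borel_measurable borel"
  unfolding vexpl_def u_expl_def borel_prod[symmetric] by measurable

lemma u_meas2: "(\<lambda>p. u_expl g (fst p) (snd p)) \<in> borel_measurable (borel \<Otimes>\<^sub>M borel)"
  unfolding u_expl_def by measurable

lemma v_meas2: "(\<lambda>p. vexpl g (fst p) (snd p)) \<in> borel_measurable (borel \<Otimes>\<^sub>M borel)"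
  unfolding vexpl_def u_expl_def by measurable


locale wsp = tf +
  fixes g a R Bx Bt Bp :: real
  assumes g: "g > 0" and a: "a > 0" and Rg: "R > 1/g"
    and box: "\<And>p. p \<in> K \<Longrightarrow> a \<le> fst p \<and> fst p < R \<and> \<bar>snd p\<bar> < R"
    and Bx: "\<And>p. \<bar>phx p\<bar> \<le> Bx" and Bt: "\<And>p. \<bar>pht p\<bar> \<le> Bt" and Bp: "\<And>p. \<bar>\<phi> p\<bar> \<le> Bp"
begin

lemma R0: "R > 0" using Rg g by (smt (verit) divide_pos_pos)

lemma phi_out: assumes "fst p < a \<or> fst p \<ge> R \<or> \<bar>snd p\<bar> \<ge> R" shows "\<phi> p = 0"
proof (rule phi_K)
  show "p \<notin> K" using box[of p] assms by auto
qed
lemma pht_out: assumes "fst p < a \<or> fst p \<ge> R \<or> \<bar>snd p\<bar> \<ge> R" shows "pht p = 0"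
proof (rule pht_K)
  show "p \<notin> K" using box[of p] assms by auto
qed
lemma phx_out: assumes "fst p < a \<or> fst p \<ge> R \<or> \<bar>snd p\<bar> \<ge> R" shows "phx p = 0"
proof (rule phx_K)
  show "p \<notin> K" using box[of p] assms by auto
qed

lemma phi_cont_t: "continuous_on S (\<lambda>t. \<phi> (\<xi>, t))"
  using phi_cont by (intro continuous_on_compose2[OF phi_cont]) (auto intro!: continuous_intros)

lemma phi_cont_x: "continuous_on S (\<lambda>x. \<phi> (x, t))"
  using phi_cont by (intro continuous_on_compose2[OF phi_cont]) (auto intro!: continuous_intros)

definition Zf :: "real \<Rightarrow> real \<Rightarrow> real" where
  "Zf \<xi> t = u_expl g \<xi> t * pht (\<xi>, t) + vexpl g \<xi> t * \<phi> (\<xi>, t)"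

lemma C1_hk:
  assumes x: "0 < \<xi>" "\<xi> \<noteq> 1/g"
  shows "((\<lambda>t. Zf \<xi> t) has_integral (- u_expl g \<xi> 0 * \<phi> (\<xi>, 0))) {0..R}"
proof (cases "\<xi> > 1/g")
  case True
  have "Zf \<xi> t = 0" for t
    using True g by (simp add: Zf_def u_big' v_big)
  moreover have "u_expl g \<xi> 0 = 0" using True g by (simp add: u_big')
  ultimately show ?thesis by simp
next
  case False
  then have x1: "\<xi> < 1/g" using x by simp
  define T where "T = 1/g - \<xi>"
  have T: "0 < T" "T < R" using x1 Rg x by (auto simp: T_def)
  have T1: "T < 1/g" using x by (simp add: T_def)
  define f1 where "f1 t = A1 g \<xi> t * \<phi> (\<xi>, t)" for t
  define f2 where "f2 t = A2 g \<xi> t * \<phi> (\<xi>, t)" for t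
  have P1: "(Zf \<xi> has_integral (f1 T - f1 0)) {0..T}"
  proof (rule fundamental_theorem_of_calculus_interior)
    show "0 \<le> T" using T by simp
    have "continuous_on {0..T} (\<lambda>t. A1 g \<xi> t)"
    proof -
      have "\<forall>t\<in>{0..T}. 1 - g*t > 0"
      proof
        fix t assume "t \<in> {0..T}"
        then have "g*t \<le> g*T" using g by (intro mult_left_mono) auto
        moreover have "g*T < 1" using T1 g by (simp add: field_simps)
        ultimately show "1 - g*t > 0" by simp
      qed
      then show ?thesis unfolding A1_def by (intro continuous_intros) auto
    qed
    then show "continuous_on {0..T} f1" unfolding f1_def by (intro continuous_intros phi_cont_t)
    fix t assume t: "t \<in> {0<..<T}"
    have tt: "0 < t" "t < 1/g - \<xi>" using t by (auto simp: T_def)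
    have "(f1 has_real_derivative vexpl g \<xi> t * \<phi> (\<xi>, t) + pht (\<xi>, t) * A1 g \<xi> t) (at t)"
      unfolding f1_def by (rule derivative_eq_intros dA1_t_v[OF g x(1) tt] dt refl)+
    moreover have "A1 g \<xi> t = u_expl g \<xi> t"
      using u_A1[OF g, of \<xi> t] tt x T1 by (simp add: T_def)
    ultimately show "(f1 has_vector_derivative Zf \<xi> t) (at t)"
      by (simp add: Zf_def has_real_derivative_iff_has_vector_derivative[symmetric] algebra_simps)
  qed
  have P2: "(Zf \<xi> has_integral (f2 R - f2 T)) {T..R}"
  proof (rule fundamental_theorem_of_calculus_interior)
    show "T \<le> R" using T by simp
    have "continuous_on {T..R} (\<lambda>t. A2 g \<xi> t)"
      unfolding A2_def using T g by (intro continuous_intros) auto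
    then show "continuous_on {T..R} f2" unfolding f2_def by (intro continuous_intros phi_cont_t)
    fix t assume t: "t \<in> {T<..<R}"
    have tt: "t > 1/g - \<xi>" using t by (auto simp: T_def)
    have "(f2 has_real_derivative vexpl g \<xi> t * \<phi> (\<xi>, t) + pht (\<xi>, t) * A2 g \<xi> t) (at t)"
      unfolding f2_def by (rule derivative_eq_intros dA2_t_v[OF g x(1) x1 tt] dt refl)+
    moreover have "A2 g \<xi> t = u_expl g \<xi> t"
      using u_A2[OF g, of t \<xi>] tt x x1 T by (simp add: T_def)
    ultimately show "(f2 has_vector_derivative Zf \<xi> t) (at t)"
      by (simp add: Zf_def has_real_derivative_iff_has_vector_derivative[symmetric] algebra_simps)
  qed
  have "(Zf \<xi> has_integral (f1 T - f1 0) + (f2 R - f2 T)) {0..R}"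
    by (rule has_integral_combine[OF _ _ P1 P2]) (use T in auto)
  moreover have "f1 T = f2 T"
  proof -
    have "A1 g \<xi> T = u_expl g \<xi> T" using u_A1[OF g, of \<xi> T] x T T1 by (simp add: T_def)
    moreover have "A2 g \<xi> T = u_expl g \<xi> T" using u_A2[OF g, of T \<xi>] x x1 T by (simp add: T_def)
    ultimately show ?thesis by (simp add: f1_def f2_def)
  qed
  moreover have "f2 R = 0" using phi_out[of "(\<xi>, R)"] R0 by (simp add: f2_def)
  moreover have "f1 0 = u_expl g \<xi> 0 * \<phi> (\<xi>, 0)"
    using u_A1[OF g, of \<xi> 0] x x1 g by (simp add: f1_def)
  ultimately show ?thesis by simp
qed

end


definition Qf :: "real \<Rightarrow> real \<Rightarrow> real \<Rightarrow> real \<Rightarrow> real" where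
  "Qf g R \<xi> t = (if 0 < t \<and> t \<le> R \<and> 1/g - t \<le> \<xi> \<and> \<xi> \<le> 1/g then 1/(g*t) else 0)"

lemma Qf_int:
  assumes g: "g > 0" and R: "R > 0"
  shows "integrable (lborel \<Otimes>\<^sub>M lborel) (\<lambda>p. Qf g R (fst p) (snd p))"
proof -
  let ?f = "\<lambda>p::real\<times>real. Qf g R (snd p) (fst p)"
  have m: "?f \<in> borel_measurable (lborel \<Otimes>\<^sub>M lborel)"
    unfolding Qf_def by measurable
  have inner: "(\<integral>\<xi>. norm (?f (t, \<xi>)) \<partial>lborel) = indicator {0<..R} t * (1/g)" for t
  proof (cases "0 < t \<and> t \<le> R")
    case True
    have "(\<lambda>\<xi>. norm (?f (t, \<xi>))) = (\<lambda>\<xi>. indicator {1/g - t .. 1/g} \<xi> * (1/(g*t)))"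
      using True g by (auto simp: Qf_def indicator_def fun_eq_iff)
    then have "(\<integral>\<xi>. norm (?f (t, \<xi>)) \<partial>lborel) = measure lborel {1/g - t .. 1/g} * (1/(g*t))"
      by simp
    also have "\<dots> = 1/g" using True g by simp
    finally show ?thesis using True by simp
  next
    case False
    then show ?thesis by (auto simp: Qf_def)
  qed
  have "integrable (lborel \<Otimes>\<^sub>M lborel) ?f"
  proof (rule lborel_pair.Fubini_integrable[OF m])
    show "integrable lborel (\<lambda>t. \<integral>\<xi>. norm (?f (t, \<xi>)) \<partial>lborel)"
      unfolding inner using R by (intro integrable_mult_left) (auto intro!: integrable_real_indicator)
    show "AE t in lborel. integrable lborel (\<lambda>\<xi>. ?f (t, \<xi>))"
    proof (rule AE_I2)
      fix t :: real
      have "(\<lambda>\<xi>. ?f (t, \<xi>)) = (\<lambda>\<xi>. (if 0 < t \<and> t \<le> R then 1/(g*t) else 0) * indicator {1/g - t .. 1/g} \<xi>)"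
        by (auto simp: Qf_def indicator_def fun_eq_iff)
      moreover have "integrable lborel (\<lambda>\<xi>. (if 0 < t \<and> t \<le> R then 1/(g*t) else 0) * indicator {1/g - t .. 1/g} \<xi> :: real)"
        by (intro integrable_mult_right) (auto intro!: integrable_real_indicator simp: emeasure_lborel_Icc_eq)
      ultimately show "integrable lborel (\<lambda>\<xi>. ?f (t, \<xi>))" by simp
    qed
  qed
  moreover have "(\<lambda>p::real\<times>real. Qf g R (snd p) (fst p)) = (\<lambda>(x, y). Qf g R y x)" by auto
  ultimately show ?thesis
    using lborel_pair.integrable_product_swap_iff[of "\<lambda>p. Qf g R (fst p) (snd p)"] by simp
qed


lemma vb1:
  assumes g: "g > 0" and x: "0 < \<xi>" "\<xi> < 1/g - t" and t: "0 \<le> t"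
  shows "\<bar>vexpl g \<xi> t\<bar> \<le> 1/(g*\<xi>)"
proof -
  have "g*\<xi> < g*(1/g - t)" using mult_strict_left_mono[OF x(2) g] by simp
  then have l: "g*\<xi> < 1 - g*t" using g by (simp add: right_diff_distrib)
  have gx: "0 < g*\<xi>" using g x by simp
  have "\<bar>vexpl g \<xi> t\<bar> = u_expl g \<xi> t / (1 - g*t)"
    using v_reg1[OF x t] l gx u_nonneg[of g \<xi> t] by simp
  also have "\<dots> \<le> 1 / (1 - g*t)" using u_le1[OF g] l gx by (intro divide_right_mono) auto
  also have "\<dots> \<le> 1/(g*\<xi>)" using l gx by (intro divide_left_mono) auto
  finally show ?thesis .
qed

lemma vb2:
  assumes g: "g > 0" and x: "1/g - t < \<xi>" "\<xi> < 1/g" and t: "0 < t"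
  shows "\<bar>vexpl g \<xi> t\<bar> \<le> 1/(g*t)"
proof -
  have gt: "0 < g*t" using g t by simp
  have "\<bar>vexpl g \<xi> t\<bar> = u_expl g \<xi> t / (g*t)"
    using v_reg2[OF x t] gt u_nonneg[of g \<xi> t] by simp
  also have "\<dots> \<le> 1 / (g*t)" using u_le1[OF g] gt by (intro divide_right_mono) auto
  finally show ?thesis .
qed

lemma v_zero_else:
  assumes A: "\<not> (0 < \<xi> \<and> \<xi> < 1/g - t \<and> 0 \<le> t)" and B: "\<not> (1/g - t < \<xi> \<and> \<xi> < 1/g \<and> 0 < t)"
  shows "vexpl g \<xi> t = 0"
  unfolding vexpl_def if_not_P[OF A] if_not_P[OF B] ..

lemma vb_C1:
  assumes g: "g > 0" and x: "0 < \<xi>" "\<xi> < 1/g" and t: "0 \<le> t"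
  shows "\<bar>vexpl g \<xi> t\<bar> \<le> 1/(g*\<xi>) + 1/(1 - g*\<xi>)"
proof -
  have p1: "0 < 1/(g*\<xi>)" using g x by simp
  have c: "0 < 1 - g*\<xi>" using g x by (simp add: field_simps)
  then have p2: "0 < 1/(1 - g*\<xi>)" by simp
  consider "0 < \<xi> \<and> \<xi> < 1/g - t \<and> 0 \<le> t" | "1/g - t < \<xi> \<and> \<xi> < 1/g \<and> 0 < t"
    | "\<not> (0 < \<xi> \<and> \<xi> < 1/g - t \<and> 0 \<le> t)" "\<not> (1/g - t < \<xi> \<and> \<xi> < 1/g \<and> 0 < t)" by blast
  then show ?thesis
  proof cases
    case 1
    then have "\<bar>vexpl g \<xi> t\<bar> \<le> 1/(g*\<xi>)" using vb1[OF g, of \<xi> t] by blast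
    then show ?thesis using p2 by linarith
  next
    case 2
    have "1 - g*\<xi> < g*t"
    proof -
      have "g*(1/g - t) < g*\<xi>" using mult_strict_left_mono[of "1/g - t" \<xi> g] 2 g by simp
      then show ?thesis using g by (simp add: right_diff_distrib)
    qed
    then have "1/(g*t) \<le> 1/(1 - g*\<xi>)" using c by (intro divide_left_mono) auto
    moreover have "\<bar>vexpl g \<xi> t\<bar> \<le> 1/(g*t)" using vb2[OF g, of t \<xi>] 2 by blast
    ultimately show ?thesis using p1 by linarith
  next
    case 3 then show ?thesis using v_zero_else[OF 3] p1 p2 by simp
  qed
qed

lemma vb_C2:
  assumes g: "g > 0" and x: "0 < \<alpha>" "\<alpha> \<le> \<xi>" and t: "0 < t"
  shows "\<bar>vexpl g \<xi> t\<bar> \<le> 1/(g*\<alpha>) + 1/(g*t)"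
proof -
  have p1: "0 < 1/(g*\<alpha>)" using g x by simp
  have p2: "0 < 1/(g*t)" using g t by simp
  have q: "1/(g*\<xi>) \<le> 1/(g*\<alpha>)" using g x by (intro divide_left_mono mult_left_mono) auto
  consider "0 < \<xi> \<and> \<xi> < 1/g - t \<and> 0 \<le> t" | "1/g - t < \<xi> \<and> \<xi> < 1/g \<and> 0 < t"
    | "\<not> (0 < \<xi> \<and> \<xi> < 1/g - t \<and> 0 \<le> t)" "\<not> (1/g - t < \<xi> \<and> \<xi> < 1/g \<and> 0 < t)" by blast
  then show ?thesis
  proof cases
    case 1
    then have "\<bar>vexpl g \<xi> t\<bar> \<le> 1/(g*\<xi>)" using vb1[OF g, of \<xi> t] by blast
    then show ?thesis using p2 q by linarith
  next
    case 2
    then have "\<bar>vexpl g \<xi> t\<bar> \<le> 1/(g*t)" using vb2[OF g, of t \<xi>] by blast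
    then show ?thesis using p1 by linarith
  next
    case 3 then show ?thesis using v_zero_else[OF 3] p1 p2 by simp
  qed
qed

lemma vb_box:
  assumes g: "g > 0" and x: "0 < \<alpha>" "\<alpha> \<le> \<xi>" and t: "t \<le> R"
  shows "\<bar>vexpl g \<xi> t\<bar> \<le> 1/(g*\<alpha>) + Qf g R \<xi> t"
proof -
  have p1: "0 < 1/(g*\<alpha>)" using g x by simp
  have q: "1/(g*\<xi>) \<le> 1/(g*\<alpha>)" using g x by (intro divide_left_mono mult_left_mono) auto
  have Q0: "0 \<le> Qf g R \<xi> t" using g by (auto simp: Qf_def)
  consider "0 < \<xi> \<and> \<xi> < 1/g - t \<and> 0 \<le> t" | "1/g - t < \<xi> \<and> \<xi> < 1/g \<and> 0 < t"
    | "\<not> (0 < \<xi> \<and> \<xi> < 1/g - t \<and> 0 \<le> t)" "\<not> (1/g - t < \<xi> \<and> \<xi> < 1/g \<and> 0 < t)" by blast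
  then show ?thesis
  proof cases
    case 1
    then have "\<bar>vexpl g \<xi> t\<bar> \<le> 1/(g*\<xi>)" using vb1[OF g, of \<xi> t] by blast
    then show ?thesis using q Q0 by linarith
  next
    case 2
    then have "Qf g R \<xi> t = 1/(g*t)" using t by (simp add: Qf_def)
    moreover have "\<bar>vexpl g \<xi> t\<bar> \<le> 1/(g*t)" using vb2[OF g, of t \<xi>] 2 by blast
    ultimately show ?thesis using p1 by linarith
  next
    case 3 then show ?thesis using v_zero_else[OF 3] p1 Q0 by simp
  qed
qed

context wsp
begin

lemma pht_meas: "pht \<in> borel_measurable borel" using ct by (rule borel_measurable_continuous_onI)
lemma phx_meas: "phx \<in> borel_measurable borel" using cx by (rule borel_measurable_continuous_onI)
lemma phi_meas: "\<phi> \<in> borel_measurable borel" using phi_cont by (rule borel_measurable_continuous_onI)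

lemma Zf_meas: "(\<lambda>p. Zf (fst p) (snd p)) \<in> borel_measurable borel"
proof -
  have "(\<lambda>p. u_expl g (fst p) (snd p) * pht p + vexpl g (fst p) (snd p) * \<phi> p) \<in> borel_measurable borel"
    using u_meas[of g] v_meas[of g] pht_meas phi_meas by measurable
  then show ?thesis by (simp add: Zf_def)
qed

lemma slice_t: "f \<in> borel_measurable borel \<Longrightarrow> (\<lambda>t. f (\<xi>, t)) \<in> borel_measurable (borel :: real measure)"
  for f :: "real \<times> real \<Rightarrow> real"
proof -
  assume f: "f \<in> borel_measurable borel"
  have "(\<lambda>t. (\<xi>, t)) \<in> borel_measurable borel" by (intro borel_measurable_continuous_onI continuous_intros)
  from measurable_compose[OF this f] show ?thesis by simp
qed

lemma slice_x: "f \<in> borel_measurable borel \<Longrightarrow> (\<lambda>x. f (x, t)) \<in> borel_measurable (borel :: real measure)"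
  for f :: "real \<times> real \<Rightarrow> real"
proof -
  assume f: "f \<in> borel_measurable borel"
  have "(\<lambda>x. (x, t)) \<in> borel_measurable borel" by (intro borel_measurable_continuous_onI continuous_intros)
  from measurable_compose[OF this f] show ?thesis by simp
qed

definition Dset :: "(real \<times> real) set" where "Dset = {p. 0 < fst p \<and> 0 \<le> snd p}"

definition Zp :: "real \<times> real \<Rightarrow> real" where
  "Zp p = indicator Dset p * Zf (fst p) (snd p)"

lemma C1L:
  assumes x: "0 < \<xi>" "\<xi> \<noteq> 1/g"
  shows "(\<integral>t. Zp (\<xi>, t) \<partial>lborel) = - u_expl g \<xi> 0 * \<phi> (\<xi>, 0)"
proof -
  have eq: "Zp (\<xi>, t) = indicator {0..R} t * Zf \<xi> t" for t
  proof (cases "t \<le> R")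
    case True then show ?thesis using x by (auto simp: Zp_def Dset_def indicator_def)
  next
    case False
    then have "R \<le> \<bar>t\<bar>" by simp
    then have "Zf \<xi> t = 0" using pht_out[of "(\<xi>, t)"] phi_out[of "(\<xi>, t)"] by (simp add: Zf_def)
    then show ?thesis by (simp add: Zp_def)
  qed
  have B: "\<bar>Zf \<xi> t\<bar> \<le> Bt + (1/(g*\<xi>) + 1/\<bar>1 - g*\<xi>\<bar>) * Bp" if t: "t \<in> {0..R}" for t
  proof -
    have "\<bar>vexpl g \<xi> t\<bar> \<le> 1/(g*\<xi>) + 1/\<bar>1 - g*\<xi>\<bar>"
    proof (cases "\<xi> < 1/g")
      case True
      have "0 < 1 - g*\<xi>" using True g by (simp add: field_simps)
      then show ?thesis using vb_C1[OF g x(1) True, of t] t by simp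
    next
      case False
      then have "vexpl g \<xi> t = 0" using g by (simp add: v_big)
      moreover have "0 \<le> 1/(g*\<xi>)" using g x by simp
      ultimately show ?thesis by simp
    qed
    moreover have "\<bar>u_expl g \<xi> t\<bar> \<le> 1" using u_nonneg[of g \<xi> t] u_le1[OF g] by simp
    ultimately have m1: "\<bar>u_expl g \<xi> t\<bar> * \<bar>pht (\<xi>, t)\<bar> \<le> 1 * Bt"
      and m2: "\<bar>vexpl g \<xi> t\<bar> * \<bar>\<phi> (\<xi>, t)\<bar> \<le> (1/(g*\<xi>) + 1/\<bar>1 - g*\<xi>\<bar>) * Bp"
      using Bt[of "(\<xi>, t)"] Bp[of "(\<xi>, t)"] g x
      by (intro mult_mono; simp)+
    have "\<bar>Zf \<xi> t\<bar> \<le> \<bar>u_expl g \<xi> t * pht (\<xi>, t)\<bar> + \<bar>vexpl g \<xi> t * \<phi> (\<xi>, t)\<bar>"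
      unfolding Zf_def by (rule abs_triangle_ineq)
    also have "\<dots> = \<bar>u_expl g \<xi> t\<bar> * \<bar>pht (\<xi>, t)\<bar> + \<bar>vexpl g \<xi> t\<bar> * \<bar>\<phi> (\<xi>, t)\<bar>"
      by (simp add: abs_mult)
    finally show ?thesis using m1 m2 by linarith
  qed
  have "(\<integral>t. indicator {0..R} t * Zf \<xi> t \<partial>lborel) = - u_expl g \<xi> 0 * \<phi> (\<xi>, 0)"
    by (rule hk_to_lebesgue[OF C1_hk[OF x] slice_t[OF Zf_meas, simplified] B])
  then show ?thesis unfolding eq .
qed

end


lemma flux_meas: "(\<lambda>p. flux g (u_expl g (fst p) (snd p))) \<in> borel_measurable borel"
  unfolding flux_def using u_meas[of g] by measurable

lemma flux_le1: "g > 0 \<Longrightarrow> flux g (u_expl g \<xi> t) \<le> 1"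
proof -
  assume g: "g > 0"
  have "\<bar>u_expl g \<xi> t\<bar> powr (1+g) \<le> 1" using u_le1[OF g] u_nonneg[of g \<xi> t] g by (intro powr_le1) auto
  moreover have "1 \<le> 1 + g" using g by simp
  ultimately show ?thesis unfolding flux_def by (simp add: divide_le_eq)
qed

lemma flux_ge0: "0 \<le> flux g (u_expl g \<xi> t)" if "g > 0"
  using that by (simp add: flux_def)

lemma flux_cont: "g > 0 \<Longrightarrow> isCont (flux g) x"
  unfolding flux_def by (intro continuous_intros continuous_powr_real) auto


context wsp
begin

definition cc :: real where "cc = min (a/2) (R/2)"

lemma cc: "0 < cc" "cc < a" "cc < R" using a R0 by (auto simp: cc_def)

definition Yf :: "real \<Rightarrow> real \<Rightarrow> real" where
  "Yf t \<xi> = flux g (u_expl g \<xi> t) * phx (\<xi>, t) + vexpl g \<xi> t * \<phi> (\<xi>, t)"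

lemma C2_hk:
  assumes t: "t > 0"
  shows "(Yf t has_integral 0) {cc..R}"
proof -
  define k where "k \<xi> = flux g (u_expl g \<xi> t) * \<phi> (\<xi>, t)" for \<xi>
  have "(Yf t has_integral (k R - k cc)) {cc..R}"
  proof (rule fundamental_theorem_of_calculus_interior_strong[of "{1/g - t, 1/g}"])
    show "finite {1/g - t, 1/g}" by simp
    show "cc \<le> R" using cc by simp
    have "isCont k x" if x: "x \<in> {cc..R}" for x
    proof -
      have x0: "x > 0" using x cc by auto
      have "isCont (\<lambda>\<xi>. flux g (u_expl g \<xi> t)) x"
        using isCont_o2[where f="\<lambda>\<xi>. u_expl g \<xi> t" and a=x and g="flux g"] u_isCont[OF g t x0] flux_cont[OF g]
        by simp
      moreover have "isCont (\<lambda>\<xi>. \<phi> (\<xi>, t)) x"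
        using phi_cont_x[of UNIV t] by (simp add: continuous_on_eq_continuous_at)
      ultimately show ?thesis unfolding k_def by (intro continuous_intros)
    qed
    then show "continuous_on {cc..R} k" by (simp add: continuous_at_imp_continuous_on)
    fix x assume x: "x \<in> {cc<..<R} - {1/g - t, 1/g}"
    have x0: "x > 0" using x cc by auto
    have "(k has_real_derivative vexpl g x t * \<phi> (x, t) + phx (x, t) * flux g (u_expl g x t)) (at x)"
      unfolding k_def using x x0
      by (intro derivative_eq_intros) (auto intro!: dflux_x[OF g t] dx)
    then show "(k has_vector_derivative Yf t x) (at x)"
      by (simp add: Yf_def has_real_derivative_iff_has_vector_derivative[symmetric] algebra_simps)
  qed
  moreover have "k R = 0" using phi_out[of "(R, t)"] by (simp add: k_def)
  moreover have "k cc = 0" using phi_out[of "(cc, t)"] cc by (simp add: k_def)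
  ultimately show ?thesis by simp
qed

definition Hp :: "real \<times> real \<Rightarrow> real" where
  "Hp p = indicator Dset p * (u_expl g (fst p) (snd p) * pht p - flux g (u_expl g (fst p) (snd p)) * phx p)"

lemma Yf_meas: "Yf t \<in> borel_measurable borel"
proof -
  have "(\<lambda>p. flux g (u_expl g (fst p) (snd p)) * phx p + vexpl g (fst p) (snd p) * \<phi> p) \<in> borel_measurable borel"
    using flux_meas[of g] v_meas[of g] phx_meas phi_meas by measurable
  from slice_x[OF this, of t] show ?thesis by (simp add: Yf_def[abs_def])
qed

lemma Yf_bound:
  assumes t: "t > 0" and x: "cc \<le> \<xi>"
  shows "\<bar>Yf t \<xi>\<bar> \<le> Bx + (1/(g*cc) + 1/(g*t)) * Bp"
proof -
  have v: "\<bar>vexpl g \<xi> t\<bar> \<le> 1/(g*cc) + 1/(g*t)" using vb_C2[OF g cc(1) x t] .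
  have f: "\<bar>flux g (u_expl g \<xi> t)\<bar> \<le> 1" using flux_le1[OF g] flux_ge0[OF g] by simp
  have m1: "\<bar>flux g (u_expl g \<xi> t)\<bar> * \<bar>phx (\<xi>, t)\<bar> \<le> 1 * Bx"
    using f Bx[of "(\<xi>, t)"] by (intro mult_mono) auto
  have m2: "\<bar>vexpl g \<xi> t\<bar> * \<bar>\<phi> (\<xi>, t)\<bar> \<le> (1/(g*cc) + 1/(g*t)) * Bp"
    using v Bp[of "(\<xi>, t)"] g cc t by (intro mult_mono) auto
  have "\<bar>Yf t \<xi>\<bar> \<le> \<bar>flux g (u_expl g \<xi> t)\<bar> * \<bar>phx (\<xi>, t)\<bar> + \<bar>vexpl g \<xi> t\<bar> * \<bar>\<phi> (\<xi>, t)\<bar>"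
    unfolding Yf_def by (metis abs_mult abs_triangle_ineq)
  then show ?thesis using m1 m2 by linarith
qed

lemma Zp_bound:
  assumes t: "t > 0"
  shows "\<bar>Zp (\<xi>, t)\<bar> \<le> indicator {cc..R} \<xi> * (Bt + (1/(g*cc) + 1/(g*t)) * Bp)"
proof (cases "cc \<le> \<xi> \<and> \<xi> \<le> R")
  case True
  have v: "\<bar>vexpl g \<xi> t\<bar> \<le> 1/(g*cc) + 1/(g*t)" using vb_C2[OF g cc(1) _ t] True by simp
  have f: "\<bar>u_expl g \<xi> t\<bar> \<le> 1" using u_le1[OF g] u_nonneg[of g \<xi> t] by simp
  have m1: "\<bar>u_expl g \<xi> t\<bar> * \<bar>pht (\<xi>, t)\<bar> \<le> 1 * Bt"
    using f Bt[of "(\<xi>, t)"] by (intro mult_mono) auto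
  have m2: "\<bar>vexpl g \<xi> t\<bar> * \<bar>\<phi> (\<xi>, t)\<bar> \<le> (1/(g*cc) + 1/(g*t)) * Bp"
    using v Bp[of "(\<xi>, t)"] g cc t by (intro mult_mono) auto
  have "\<bar>Zf \<xi> t\<bar> \<le> \<bar>u_expl g \<xi> t\<bar> * \<bar>pht (\<xi>, t)\<bar> + \<bar>vexpl g \<xi> t\<bar> * \<bar>\<phi> (\<xi>, t)\<bar>"
    unfolding Zf_def by (metis abs_mult abs_triangle_ineq)
  then have "\<bar>Zf \<xi> t\<bar> \<le> Bt + (1/(g*cc) + 1/(g*t)) * Bp" using m1 m2 by linarith
  moreover have "\<bar>Zp (\<xi>, t)\<bar> \<le> \<bar>Zf \<xi> t\<bar>" by (simp add: Zp_def indicator_def)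
  ultimately show ?thesis using True by simp
next
  case False
  then have "\<xi> < a \<or> R \<le> \<xi>" using cc by auto
  then have "Zf \<xi> t = 0" using pht_out[of "(\<xi>, t)"] phi_out[of "(\<xi>, t)"] by (auto simp: Zf_def)
  then show ?thesis using False by (simp add: Zp_def)
qed

end


context wsp
begin

lemma Dset_sets: "Dset \<in> sets (borel :: (real \<times> real) measure)"
proof -
  have "{p::real\<times>real \<in> space (borel \<Otimes>\<^sub>M borel). 0 < fst p \<and> 0 \<le> snd p} \<in> sets (borel \<Otimes>\<^sub>M borel)" by measurable
  then show ?thesis unfolding borel_prod by (simp add: Dset_def space_pair_measure)
qed

lemma Zp_meas: "Zp \<in> borel_measurable borel"
  unfolding Zp_def[abs_def] using Zf_meas Dset_sets by measurable

lemma Hp_meas: "Hp \<in> borel_measurable borel"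
  unfolding Hp_def[abs_def] using u_meas[of g] flux_meas[of g] pht_meas phx_meas Dset_sets by measurable

lemma C2L:
  assumes t: "t > 0"
  shows "(\<integral>\<xi>. Hp (\<xi>, t) \<partial>lborel) = (\<integral>\<xi>. Zp (\<xi>, t) \<partial>lborel)"
proof -
  define C where "C = Bt + (1/(g*cc) + 1/(g*t)) * Bp"
  define C' where "C' = Bx + (1/(g*cc) + 1/(g*t)) * Bp"
  have eqH: "Hp (\<xi>, t) = Zp (\<xi>, t) - indicator {cc..R} \<xi> * Yf t \<xi>" for \<xi>
  proof (cases "cc \<le> \<xi> \<and> \<xi> \<le> R")
    case True
    then have "(\<xi>, t) \<in> Dset" using cc t by (auto simp: Dset_def)
    then show ?thesis using True by (simp add: Hp_def Zp_def Zf_def Yf_def algebra_simps)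
  next
    case False
    then have "\<xi> < a \<or> R \<le> \<xi>" using cc by auto
    then have "pht (\<xi>, t) = 0" "phx (\<xi>, t) = 0" "\<phi> (\<xi>, t) = 0"
      using pht_out[of "(\<xi>, t)"] phx_out[of "(\<xi>, t)"] phi_out[of "(\<xi>, t)"] by auto
    then show ?thesis using False by (simp add: Hp_def Zp_def Zf_def)
  qed
  have iI: "integrable lborel (\<lambda>\<xi>. indicator {cc..R} \<xi> * C :: real)"
    by (intro integrable_mult_left) (auto intro!: integrable_real_indicator simp: emeasure_lborel_Icc_eq)
  have iI': "integrable lborel (\<lambda>\<xi>. indicator {cc..R} \<xi> * C' :: real)"
    by (intro integrable_mult_left) (auto intro!: integrable_real_indicator simp: emeasure_lborel_Icc_eq)
  have intZ: "integrable lborel (\<lambda>\<xi>. Zp (\<xi>, t))"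
  proof (rule Bochner_Integration.integrable_bound[OF iI])
    show "(\<lambda>\<xi>. Zp (\<xi>, t)) \<in> borel_measurable lborel" using slice_x[OF Zp_meas, of t] by simp
    show "AE \<xi> in lborel. norm (Zp (\<xi>, t)) \<le> norm (indicator {cc..R} \<xi> * C)"
      using Zp_bound[OF t] by (intro AE_I2) (auto simp: C_def intro: order_trans[OF _ abs_ge_self])
  qed
  have intY: "integrable lborel (\<lambda>\<xi>. indicator {cc..R} \<xi> * Yf t \<xi>)"
  proof (rule Bochner_Integration.integrable_bound[OF iI'])
    show "(\<lambda>\<xi>. indicator {cc..R} \<xi> * Yf t \<xi>) \<in> borel_measurable lborel" using Yf_meas[of t] by measurable
    show "AE \<xi> in lborel. norm (indicator {cc..R} \<xi> * Yf t \<xi>) \<le> norm (indicator {cc..R} \<xi> * C')"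
      using Yf_bound[OF t] by (intro AE_I2) (auto simp: C'_def indicator_def intro: order_trans[OF _ abs_ge_self])
  qed
  have hk: "(\<integral>\<xi>. indicator {cc..R} \<xi> * Yf t \<xi> \<partial>lborel) = 0"
    by (rule hk_to_lebesgue[OF C2_hk[OF t] Yf_meas]) (use Yf_bound[OF t] in \<open>auto simp: C'_def\<close>)
  have "(\<integral>\<xi>. Hp (\<xi>, t) \<partial>lborel) = (\<integral>\<xi>. Zp (\<xi>, t) - indicator {cc..R} \<xi> * Yf t \<xi> \<partial>lborel)"
    unfolding eqH ..
  also have "\<dots> = (\<integral>\<xi>. Zp (\<xi>, t) \<partial>lborel) - (\<integral>\<xi>. indicator {cc..R} \<xi> * Yf t \<xi> \<partial>lborel)"
    by (rule Bochner_Integration.integral_diff[OF intZ intY])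
  finally show ?thesis using hk by simp
qed

end


context wsp
begin

definition bx :: "(real \<times> real) set" where "bx = cbox (cc, 0) (R, R)"

lemma bx_mem: "p \<in> bx \<longleftrightarrow> cc \<le> fst p \<and> fst p \<le> R \<and> 0 \<le> snd p \<and> snd p \<le> R"
  by (cases p) (auto simp: bx_def cbox_Pair_iff)

lemma bx_fin: "emeasure lborel bx < \<infinity>" unfolding bx_def by (rule emeasure_lborel_cbox_finite)

lemma bx_int: "integrable lborel (\<lambda>p. indicator bx p * C :: real)"
  by (intro integrable_mult_left integrable_real_indicator bx_fin) (simp add: bx_def)

lemma in_K_box: assumes D: "p \<in> Dset" and H: "pht p \<noteq> 0 \<or> phx p \<noteq> 0 \<or> \<phi> p \<noteq> 0" shows "p \<in> bx"
proof -
  have "\<not> (fst p < a \<or> fst p \<ge> R \<or> \<bar>snd p\<bar> \<ge> R)" using H pht_out[of p] phx_out[of p] phi_out[of p] by blast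
  then show ?thesis using cc D by (auto simp: bx_mem Dset_def)
qed

lemma Hp_int: "integrable lborel Hp"
proof (rule Bochner_Integration.integrable_bound[OF bx_int[of "Bt + Bx"]])
  show "Hp \<in> borel_measurable lborel" using Hp_meas by simp
  show "AE p in lborel. norm (Hp p) \<le> norm (indicator bx p * (Bt + Bx))"
  proof (rule AE_I2)
    fix p
    show "norm (Hp p) \<le> norm (indicator bx p * (Bt + Bx))"
    proof (cases "p \<in> Dset \<and> (pht p \<noteq> 0 \<or> phx p \<noteq> 0)")
      case True
      then have b: "p \<in> bx" using in_K_box by blast
      have u: "\<bar>u_expl g (fst p) (snd p)\<bar> \<le> 1" using u_le1[OF g] u_nonneg[of g "fst p" "snd p"] by simp
      have f: "\<bar>flux g (u_expl g (fst p) (snd p))\<bar> \<le> 1" using flux_le1[OF g] flux_ge0[OF g] by simp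
      have m1: "\<bar>u_expl g (fst p) (snd p)\<bar> * \<bar>pht p\<bar> \<le> 1 * Bt" using u Bt[of p] by (intro mult_mono) auto
      have m2: "\<bar>flux g (u_expl g (fst p) (snd p))\<bar> * \<bar>phx p\<bar> \<le> 1 * Bx" using f Bx[of p] by (intro mult_mono) auto
      have "\<bar>u_expl g (fst p) (snd p) * pht p - flux g (u_expl g (fst p) (snd p)) * phx p\<bar>
          \<le> \<bar>u_expl g (fst p) (snd p)\<bar> * \<bar>pht p\<bar> + \<bar>flux g (u_expl g (fst p) (snd p))\<bar> * \<bar>phx p\<bar>"
        by (metis abs_mult abs_triangle_ineq4)
      then have "\<bar>Hp p\<bar> \<le> Bt + Bx" using m1 m2 True by (simp add: Hp_def indicator_def)
      then show ?thesis using b by simp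
    next
      case False
      then have "Hp p = 0" by (auto simp: Hp_def)
      then show ?thesis by simp
    qed
  qed
qed

lemma Zp_int: "integrable lborel Zp"
proof -
  have i1: "integrable lborel (\<lambda>p. indicator bx p * (Bt + Bp/(g*cc)) + Bp * Qf g R (fst p) (snd p))"
  proof (rule Bochner_Integration.integrable_add)
    show "integrable lborel (\<lambda>p. indicator bx p * (Bt + Bp/(g*cc)) :: real)" by (rule bx_int)
    have "integrable (lborel \<Otimes>\<^sub>M lborel) (\<lambda>p. Qf g R (fst p) (snd p))" by (rule Qf_int[OF g R0])
    then have "integrable lborel (\<lambda>p::real\<times>real. Qf g R (fst p) (snd p))" by (simp add: lborel_prod)
    then show "integrable lborel (\<lambda>p::real\<times>real. Bp * Qf g R (fst p) (snd p))" by (rule integrable_mult_right)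
  qed
  show ?thesis
  proof (rule Bochner_Integration.integrable_bound[OF i1])
    show "Zp \<in> borel_measurable lborel" using Zp_meas by simp
    show "AE p in lborel. norm (Zp p) \<le> norm (indicator bx p * (Bt + Bp/(g*cc)) + Bp * Qf g R (fst p) (snd p))"
    proof (rule AE_I2)
      fix p :: "real \<times> real"
      have Q0: "0 \<le> Qf g R (fst p) (snd p)" using g by (auto simp: Qf_def)
      have Bp0: "0 \<le> Bp" using Bp[of p] by linarith
      have Bt0: "0 \<le> Bt" using Bt[of p] by linarith
      show "norm (Zp p) \<le> norm (indicator bx p * (Bt + Bp/(g*cc)) + Bp * Qf g R (fst p) (snd p))"
      proof (cases "p \<in> Dset \<and> (pht p \<noteq> 0 \<or> \<phi> p \<noteq> 0)")
        case True
        then have b: "p \<in> bx" using in_K_box by blast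
        then have bb: "cc \<le> fst p" "snd p \<le> R" by (auto simp: bx_mem)
        have v: "\<bar>vexpl g (fst p) (snd p)\<bar> \<le> 1/(g*cc) + Qf g R (fst p) (snd p)"
          by (rule vb_box[OF g cc(1) bb])
        have u: "\<bar>u_expl g (fst p) (snd p)\<bar> \<le> 1" using u_le1[OF g] u_nonneg[of g "fst p" "snd p"] by simp
        have m1: "\<bar>u_expl g (fst p) (snd p)\<bar> * \<bar>pht p\<bar> \<le> 1 * Bt" using u Bt[of p] by (intro mult_mono) auto
        have m2: "\<bar>vexpl g (fst p) (snd p)\<bar> * \<bar>\<phi> p\<bar> \<le> (1/(g*cc) + Qf g R (fst p) (snd p)) * Bp"
          using v Bp[of p] g cc Q0 by (intro mult_mono) auto
        have "\<bar>Zf (fst p) (snd p)\<bar> \<le> \<bar>u_expl g (fst p) (snd p)\<bar> * \<bar>pht p\<bar> + \<bar>vexpl g (fst p) (snd p)\<bar> * \<bar>\<phi> p\<bar>"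
          unfolding Zf_def by (metis abs_mult abs_triangle_ineq prod.collapse)
        then have "\<bar>Zf (fst p) (snd p)\<bar> \<le> Bt + Bp/(g*cc) + Bp * Qf g R (fst p) (snd p)"
          using m1 m2 by (simp add: algebra_simps)
        moreover have "\<bar>Zp p\<bar> \<le> \<bar>Zf (fst p) (snd p)\<bar>" by (simp add: Zp_def indicator_def)
        moreover have "0 \<le> Bt + Bp/(g*cc) + Bp * Qf g R (fst p) (snd p)" using Bt0 Bp0 Q0 g cc by simp
        ultimately show ?thesis using b by simp
      next
        case False
        then have "Zp p = 0" by (auto simp: Zp_def Zf_def)
        moreover have "0 \<le> indicator bx p * (Bt + Bp/(g*cc)) + Bp * Qf g R (fst p) (snd p)"
          using Bt0 Bp0 Q0 g cc by simp
        ultimately show ?thesis by simp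
      qed
    qed
  qed
qed

end


lemma u0_eq: assumes g: "g > 0" and x: "\<xi> > 0"
  shows "u_expl g \<xi> 0 = uI_of g (indicator {0 .. 1 / (1 + g)}) \<xi>"
proof (cases "\<xi> \<le> 1/g")
  case True then show ?thesis using g x by (simp add: uI_formula u_expl_def)
next
  case False then show ?thesis using g x by (simp add: uI_formula u_big')
qed

lemma uI_meas: assumes g: "g > 0" shows "uI_of g (indicator {0 .. 1 / (1 + g)}) \<in> borel_measurable borel"
proof -
  have "uI_of g (indicator {0 .. 1 / (1 + g)}) = (\<lambda>\<xi>. (g * \<xi>) powr (1/g) * indicator {0 .. 1/g} \<xi>)"
    by (rule ext) (simp add: uI_formula[OF g])
  moreover have "(\<lambda>\<xi>. (g * \<xi>) powr (1/g) * indicator {0 .. 1/g} \<xi> :: real) \<in> borel_measurable borel" by measurable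
  ultimately show ?thesis by simp
qed

context wsp
begin

lemma weak_main:
  "(LINT p : {p. fst p > 0 \<and> snd p \<ge> 0} | lborel.
            u_expl g (fst p) (snd p) * pht p - flux g (u_expl g (fst p) (snd p)) * phx p)
        + (LINT \<xi> : {0<..} | lborel. uI_of g (indicator {0 .. 1 / (1 + g)}) \<xi> * \<phi> (\<xi>, 0)) = 0"
proof -
  let ?uI = "uI_of g (indicator {0 .. 1 / (1 + g)})"
  have S1: "(LINT p : {p. fst p > 0 \<and> snd p \<ge> 0} | lborel.
            u_expl g (fst p) (snd p) * pht p - flux g (u_expl g (fst p) (snd p)) * phx p) = integral\<^sup>L lborel Hp"
    unfolding set_lebesgue_integral_def Hp_def[abs_def] Dset_def by simp
  have HpI: "integrable (lborel \<Otimes>\<^sub>M lborel) (\<lambda>(x, y). Hp (x, y))"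
    using Hp_int by (simp add: lborel_prod)
  have ZpI: "integrable (lborel \<Otimes>\<^sub>M lborel) (\<lambda>(x, y). Zp (x, y))"
    using Zp_int by (simp add: lborel_prod)
  have S2: "integral\<^sup>L lborel Hp = (\<integral>t. (\<integral>\<xi>. Hp (\<xi>, t) \<partial>lborel) \<partial>lborel)"
    using lborel_pair.integral_snd[OF HpI] by (simp add: lborel_prod)
  have S3: "(\<integral>t. (\<integral>\<xi>. Hp (\<xi>, t) \<partial>lborel) \<partial>lborel) = (\<integral>t. (\<integral>\<xi>. Zp (\<xi>, t) \<partial>lborel) \<partial>lborel)"
  proof (rule integral_cong_AE)
    show "(\<lambda>t. \<integral>\<xi>. Hp (\<xi>, t) \<partial>lborel) \<in> borel_measurable lborel"
      using lborel_pair.integrable_snd[OF HpI] by (rule borel_measurable_integrable)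
    show "(\<lambda>t. \<integral>\<xi>. Zp (\<xi>, t) \<partial>lborel) \<in> borel_measurable lborel"
      using lborel_pair.integrable_snd[OF ZpI] by (rule borel_measurable_integrable)
    show "AE t in lborel. (\<integral>\<xi>. Hp (\<xi>, t) \<partial>lborel) = (\<integral>\<xi>. Zp (\<xi>, t) \<partial>lborel)"
      using AE_lborel_singleton[of 0]
    proof (rule eventually_mono)
      fix t :: real assume t: "t \<noteq> 0"
      show "(\<integral>\<xi>. Hp (\<xi>, t) \<partial>lborel) = (\<integral>\<xi>. Zp (\<xi>, t) \<partial>lborel)"
      proof (cases "t > 0")
        case True then show ?thesis by (rule C2L)
      next
        case False
        then have "t < 0" using t by simp
        then show ?thesis by (simp add: Hp_def Zp_def Dset_def)
      qed
    qed
  qed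
  have S4: "(\<integral>t. (\<integral>\<xi>. Zp (\<xi>, t) \<partial>lborel) \<partial>lborel) = (\<integral>\<xi>. (\<integral>t. Zp (\<xi>, t) \<partial>lborel) \<partial>lborel)"
    using lborel_pair.Fubini_integral[OF ZpI] by simp
  have S5: "(\<integral>\<xi>. (\<integral>t. Zp (\<xi>, t) \<partial>lborel) \<partial>lborel) = (\<integral>\<xi>. - (indicator {0<..} \<xi> * (?uI \<xi> * \<phi> (\<xi>, 0))) \<partial>lborel)"
  proof (rule integral_cong_AE)
    show "(\<lambda>\<xi>. \<integral>t. Zp (\<xi>, t) \<partial>lborel) \<in> borel_measurable lborel"
      using lborel_pair.integrable_fst[OF ZpI] by (rule borel_measurable_integrable)
    have "(\<lambda>\<xi>. \<phi> (\<xi>, 0)) \<in> borel_measurable borel" using slice_x[OF phi_meas] .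
    then show "(\<lambda>\<xi>. - (indicator {0<..} \<xi> * (?uI \<xi> * \<phi> (\<xi>, 0)))) \<in> borel_measurable lborel"
      using uI_meas[OF g] by measurable
    show "AE \<xi> in lborel. (\<integral>t. Zp (\<xi>, t) \<partial>lborel) = - (indicator {0<..} \<xi> * (?uI \<xi> * \<phi> (\<xi>, 0)))"
      using AE_lborel_singleton[of "1/g"]
    proof (rule eventually_mono)
      fix \<xi> :: real assume x: "\<xi> \<noteq> 1/g"
      show "(\<integral>t. Zp (\<xi>, t) \<partial>lborel) = - (indicator {0<..} \<xi> * (?uI \<xi> * \<phi> (\<xi>, 0)))"
      proof (cases "\<xi> > 0")
        case True
        then show ?thesis using C1L[OF True x] u0_eq[OF g True] by simp
      next
        case False
        then show ?thesis by (simp add: Zp_def Dset_def)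
      qed
    qed
  qed
  have S6: "(\<integral>\<xi>. - (indicator {0<..} \<xi> * (?uI \<xi> * \<phi> (\<xi>, 0))) \<partial>lborel)
      = - (LINT \<xi> : {0<..} | lborel. ?uI \<xi> * \<phi> (\<xi>, 0))"
    unfolding set_lebesgue_integral_def by (simp add: Bochner_Integration.integral_minus)
  show ?thesis using S1 S2 S3 S4 S5 S6 by simp
qed

end


lemma weak_pos:
  assumes g: "g > 0"
  shows "weak_sol_pos g (uI_of g (indicator {0 .. 1 / (1 + g)})) (u_expl g)"
  unfolding weak_sol_pos_def
proof (intro allI impI)
  fix \<phi> phx pht :: "real \<times> real \<Rightarrow> real"
  assume T: "test_fun {p. fst p > 0} \<phi> phx pht"
  interpret tf \<phi> phx pht using T by unfold_locales
  obtain a0 R0 where aR: "0 < a0" "0 < R0" "\<forall>p\<in>K. a0 \<le> fst p \<and> fst p \<le> R0 \<and> \<bar>snd p\<bar> \<le> R0"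
    using box_exists by blast
  obtain Bx where Bx: "\<forall>p. \<bar>phx p\<bar> \<le> Bx" using bound_cont[OF cx phx_K] by blast
  obtain Bt where Bt: "\<forall>p. \<bar>pht p\<bar> \<le> Bt" using bound_cont[OF ct pht_K] by blast
  obtain Bp where Bp: "\<forall>p. \<bar>\<phi> p\<bar> \<le> Bp" using bound_cont[OF phi_cont phi_K] by blast
  define R where "R = R0 + 1/g + 1"
  have g1: "0 < 1/g" using g by simp
  interpret wsp \<phi> phx pht g a0 R Bx Bt Bp
  proof (unfold_locales)
    show "0 < g" by (rule g)
    show "0 < a0" by (rule aR(1))
    show "1/g < R" using aR g1 by (simp add: R_def)
    fix p assume "p \<in> K"
    then have h: "a0 \<le> fst p" "fst p \<le> R0" "\<bar>snd p\<bar> \<le> R0" using aR(3) by auto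
    show "a0 \<le> fst p \<and> fst p < R \<and> \<bar>snd p\<bar> < R" unfolding R_def using h g1 by linarith
  qed (use Bx Bt Bp in auto)
  show "(LINT p : {p. fst p > 0 \<and> snd p \<ge> 0} | lborel.
            u_expl g (fst p) (snd p) * pht p - flux g (u_expl g (fst p) (snd p)) * phx p)
        + (LINT \<xi> : {0<..} | lborel. uI_of g (indicator {0 .. 1 / (1 + g)}) \<xi> * \<phi> (\<xi>, 0)) = 0"
    by (rule weak_main)
qed

theorem mainTheorem4:
  fixes \<gamma> :: real
  assumes "\<gamma> > 0"
  defines "fI \<equiv> indicator {0 .. 1 / (1 + \<gamma>)} :: real \<Rightarrow> real"
  defines "\<rho> \<equiv> (\<lambda>x t. deriv (xi_map \<gamma>) x * u_expl \<gamma> (xi_map \<gamma> x) t)"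
  shows "(\<forall>\<xi>. uI_of \<gamma> fI \<xi> = (\<gamma> * \<xi>) powr (1/\<gamma>) * indicator {0 .. 1/\<gamma>} \<xi>)
    \<and> entropy_solution \<gamma> (uI_of \<gamma> fI) (u_expl \<gamma>)
    \<and> (\<forall>\<xi> t. \<xi> < 0 \<longrightarrow> u_expl \<gamma> \<xi> t = 0)
    \<and> (\<forall>x t. x > 0 \<and> t \<ge> 0 \<longrightarrow> \<rho> x t = rho_expl \<gamma> x t)
    \<and> (\<forall>x t. x < 0 \<and> t \<ge> 0 \<longrightarrow> \<rho> x t = 0)
    \<and> (\<forall>t. 0 \<le> t \<and> t \<le> 1/\<gamma> \<longrightarrow> ((\<lambda>x. \<rho> x t) has_integral 1 / (1 + \<gamma>)) {0<..})
    \<and> (\<forall>t. t \<ge> 1/\<gamma> \<longrightarrow>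
          ((\<lambda>x. \<rho> x t) has_integral (1 / (1 + \<gamma>)) * (\<gamma> * t) powr (- 1/\<gamma>)) {0<..})"
proof -
  have g: "\<gamma> > 0" by fact
  have rho_eq: "((\<lambda>x. \<rho> x t) has_integral I) {0<..} \<longleftrightarrow> ((\<lambda>x. rho_expl \<gamma> x t) has_integral I) {0<..}"
    if t: "t \<ge> 0" for t I
    by (rule has_integral_cong) (use rho_pos[OF g _ t] in \<open>auto simp: \<rho>_def\<close>)
  have c1: "\<forall>\<xi>. uI_of \<gamma> fI \<xi> = (\<gamma> * \<xi>) powr (1/\<gamma>) * indicator {0 .. 1/\<gamma>} \<xi>"
    using uI_formula[OF g] by (simp add: fI_def)
  have c2: "entropy_solution \<gamma> (uI_of \<gamma> fI) (u_expl \<gamma>)"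
    unfolding entropy_solution_def fI_def
    using u_Linf[OF g] weak_pos[OF g] weak_neg[OF g] entropy_lims[OF g] by blast
  have c3: "\<forall>\<xi> t. \<xi> < 0 \<longrightarrow> u_expl \<gamma> \<xi> t = 0" by (simp add: u_neg_xi)
  have c4: "\<forall>x t. x > 0 \<and> t \<ge> 0 \<longrightarrow> \<rho> x t = rho_expl \<gamma> x t" using rho_pos[OF g] by (simp add: \<rho>_def)
  have c5: "\<forall>x t. x < 0 \<and> t \<ge> 0 \<longrightarrow> \<rho> x t = 0" using rho_neg[OF g] by (simp add: \<rho>_def)
  have c6: "\<forall>t. 0 \<le> t \<and> t \<le> 1/\<gamma> \<longrightarrow> ((\<lambda>x. \<rho> x t) has_integral 1 / (1 + \<gamma>)) {0<..}"
  proof (intro allI impI)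
    fix t assume t: "0 \<le> t \<and> t \<le> 1/\<gamma>"
    show "((\<lambda>x. \<rho> x t) has_integral 1 / (1 + \<gamma>)) {0<..}"
    proof (cases "t < 1/\<gamma>")
      case True then show ?thesis using rho_int_small[OF g] t rho_eq[of t] by simp
    next
      case False
      then have "t = 1/\<gamma>" using t by simp
      then show ?thesis using rho_int_big[OF g, of t] t rho_eq[of t] g by simp
    qed
  qed
  have c7: "\<forall>t. t \<ge> 1/\<gamma> \<longrightarrow> ((\<lambda>x. \<rho> x t) has_integral (1 / (1 + \<gamma>)) * (\<gamma> * t) powr (- 1/\<gamma>)) {0<..}"
  proof (intro allI impI)
    fix t assume t: "t \<ge> 1/\<gamma>"
    then have "t \<ge> 0" using g by (smt (verit) divide_pos_pos)
    then show "((\<lambda>x. \<rho> x t) has_integral (1 / (1 + \<gamma>)) * (\<gamma> * t) powr (- 1/\<gamma>)) {0<..}"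
      using rho_int_big[OF g t] rho_eq[of t] by simp
  qed
  show ?thesis using c1 c2 c3 c4 c5 c6 c7 by blast
qed


end
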